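(* Let $\rho_0,\rho_1\in\mathrm{SEP}$ be separable states on a finite-dimensional bipartite system $AB$. Then $R_{\mathrm m}(\rho_0,\rho_1)=P_{\mathrm{LOCC}}(\rho_0,\rho_1)$; i.e. a reusable quantum memory cannot increase the optimal success rate above the LOCC optimum.
   Context: All systems are finite-dimensional. A bipartite state is separable if it is a convex combination of product pure states $\psi^A\otimes\phi^B$; $\mathrm{SEP}$ is the set of separable states. LOCC denotes local operations and classical communication between Alice (systems $A,A'$) and Bob (systems $B,B'$). An LOCC measurement channel is $\mathcal M(X)=\sum_i\mathrm{Tr}[M_iX]|ii\rangle\langle ii|$ with $\{M_i\}$ an LOCC-implementable POVM; $\|X\|_{\mathrm{LOCC}}=\sup_{\mathcal M}\|\mathcal M(X)\|_1$ over LOCC measurement channels; $P_{\mathrm{LOCC}}(\rho_0,\rho_1)=\tfrac12+\tfrac14\|\rho_0-\rho_1\|_{\mathrm{LOCC}}$. Repeated discrimination framework: $Z_j$ i.i.d. uniform on $\{0,1\}$; in round $j$ the state $\rho_{Z_j}$ is given, the guess is $Y_j$, $X_j=1$ iff $Y_j=Z_j$, $S_n=\sum_{j\le n}X_j$. A rate $r$ is achievable if for all $\varepsilon>0$, $m>0$ there is $n\ge m$ with $\Pr(S_n\ge rn)\ge1-\varepsilon$. Memory-assisted protocols: a finite-dimensional shared memory $A'B'$ with initial state $\mu_1^{A'B'}$; in round $j$ an LOCC protocol (allowed to depend on all classical outcomes of earlier rounds, but not on the $Z$'s) is applied to $\rho^{AB}_{Z_j}\otimes\mu_j^{A'B'}$,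 producing $Y_j$ and an outcome-dependent memory state $\mu_{j+1}^{A'B'}$ passed to the next round. $R_{\mathrm m}(\rho_0,\rho_1)$ is the supremum of achievable rates over all memory dimensions, initial memory states and such protocols. *)

theory Defs
  imports Complex_Main
begin

text \<open>Finite-dimensional operators are represented by their matrix entries.
  A single-party operator from a space of dimension n to one of dimension m is a
  function cmat whose entries (i,j) with i < m, j < n are the relevant ones.
  A bipartite operator on C^a (x) C^b is a function bop indexed by pairs (i,j),
  i < a (Alice), j < b (Bob).\<close>

type_synonym cmat = "nat \<Rightarrow> nat \<Rightarrow> complex"
type_synonym bop = "nat \<times> nat \<Rightarrow> nat \<times> nat \<Rightarrow> complex"

definition idm :: cmat where
  "idm i j = (if i = j then 1 else 0)"

definition mmul :: "nat \<Rightarrow> cmat \<Rightarrow> cmat \<Rightarrow> cmat" where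
  "mmul n X Y = (\<lambda>i j. \<Sum>l<n. X i l * Y l j)"

definition kraus_complete :: "nat \<Rightarrow> nat \<Rightarrow> cmat list \<Rightarrow> bool" where
  "kraus_complete d d1 Ks \<longleftrightarrow>
     (\<forall>i<d. \<forall>j<d. (\<Sum>K\<leftarrow>Ks. \<Sum>l<d1. cnj (K l i) * K l j) = (if i = j then 1 else 0))"

text \<open>Finite-round LOCC protocols, fine-grained: the protocol is the list of its leaves,
  each leaf being a product Kraus operator KA (x) KB from C^a (x) C^b to C^a' (x) C^b'
  (the product of all local Kraus operators along the branch).  In each round one party
  applies a local instrument (which may change its local dimension, thereby covering
  local ancillas and discarding of subsystems) and, depending on the outcome, the
  protocol continues.\<close>
inductive locc :: "nat \<Rightarrow> nat \<Rightarrow> nat \<Rightarrow> nat \<Rightarrow> (cmat \<times> cmat) list \<Rightarrow> bool" where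
  triv: "locc a b a b [(idm, idm)]"
| alice: "kraus_complete a a1 Ks \<Longrightarrow> length Ps = length Ks \<Longrightarrow>
          (\<forall>k<length Ks. locc a1 b a' b' (Ps ! k)) \<Longrightarrow>
          locc a b a' b'
            (concat (map (\<lambda>k. map (\<lambda>(X, Y). (mmul a1 X (Ks ! k), Y)) (Ps ! k)) [0..<length Ks]))"
| bob: "kraus_complete b b1 Ks \<Longrightarrow> length Ps = length Ks \<Longrightarrow>
          (\<forall>k<length Ks. locc a b1 a' b' (Ps ! k)) \<Longrightarrow>
          locc a b a' b'
            (concat (map (\<lambda>k. map (\<lambda>(X, Y). (X, mmul b1 Y (Ks ! k))) (Ps ! k)) [0..<length Ks]))"

definition kraus_apply :: "nat \<Rightarrow> nat \<Rightarrow> cmat \<Rightarrow> cmat \<Rightarrow> bop \<Rightarrow> bop" where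
  "kraus_apply a b KA KB X = (\<lambda>(i, j) (i', j').
     \<Sum>x<a. \<Sum>y<b. \<Sum>x'<a. \<Sum>y'<b.
       KA i x * KB j y * X (x, y) (x', y') * cnj (KA i' x') * cnj (KB j' y'))"

definition btrace :: "nat \<Rightarrow> nat \<Rightarrow> bop \<Rightarrow> complex" where
  "btrace a b X = (\<Sum>i<a. \<Sum>j<b. X (i, j) (i, j))"

definition trprod :: "nat \<Rightarrow> nat \<Rightarrow> bop \<Rightarrow> bop \<Rightarrow> complex" where
  "trprod a b M X = (\<Sum>x<a. \<Sum>y<b. \<Sum>x'<a. \<Sum>y'<b. M (x, y) (x', y') * X (x', y') (x, y))"

text \<open>POVM element of outcome o of the LOCC measurement given by the leaves L (each leaf
  labelled by lab): M_o = sum over leaves l with label o of (KA^dagger KA) (x) (KB^dagger KB).\<close>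
definition povm_elem :: "nat \<Rightarrow> nat \<Rightarrow> (cmat \<times> cmat) list \<Rightarrow> (nat \<Rightarrow> nat) \<Rightarrow> nat \<Rightarrow> bop" where
  "povm_elem a' b' L lab c = (\<lambda>(x, y) (x', y').
     \<Sum>l\<in>{l. l < length L \<and> lab l = c}.
       (\<Sum>i<a'. cnj (fst (L ! l) i x) * fst (L ! l) i x') *
       (\<Sum>j<b'. cnj (snd (L ! l) j y) * snd (L ! l) j y'))"

text \<open>||X||_LOCC: supremum over LOCC measurement channels M of ||M(X)||_1; since M(X) is
  diagonal with entries Tr[M_o X], ||M(X)||_1 = sum_o |Tr[M_o X]|.\<close>
definition locc_norm :: "nat \<Rightarrow> nat \<Rightarrow> bop \<Rightarrow> real" where
  "locc_norm dA dB X = Sup {(\<Sum>c\<in>lab ` {..<length L}. cmod (trprod dA dB (povm_elem a' b' L lab c) X))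
                           | a' b' L lab. locc dA dB a' b' L}"

definition P_LOCC :: "nat \<Rightarrow> nat \<Rightarrow> bop \<Rightarrow> bop \<Rightarrow> real" where
  "P_LOCC dA dB \<rho>0 \<rho>1 = 1/2 + 1/4 * locc_norm dA dB (\<lambda>p q. \<rho>0 p q - \<rho>1 p q)"

definition density :: "nat \<Rightarrow> nat \<Rightarrow> bop \<Rightarrow> bool" where
  "density a b X \<longleftrightarrow>
     (\<forall>p\<in>{..<a} \<times> {..<b}. \<forall>q\<in>{..<a} \<times> {..<b}. X q p = cnj (X p q)) \<and>
     (\<forall>v :: nat \<times> nat \<Rightarrow> complex.
        0 \<le> Re (\<Sum>p\<in>{..<a} \<times> {..<b}. \<Sum>q\<in>{..<a} \<times> {..<b}. cnj (v p) * X p q * v q)) \<and>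
     btrace a b X = 1"

definition sep :: "nat \<Rightarrow> nat \<Rightarrow> bop \<Rightarrow> bool" where
  "sep dA dB \<rho> \<longleftrightarrow>
     (\<exists>ps :: (real \<times> (nat \<Rightarrow> complex) \<times> (nat \<Rightarrow> complex)) list.
        (\<forall>(p, u, v)\<in>set ps. 0 \<le> p \<and> (\<Sum>i<dA. (cmod (u i))\<^sup>2) = 1 \<and> (\<Sum>j<dB. (cmod (v j))\<^sup>2) = 1) \<and>
        (\<Sum>(p, u, v)\<leftarrow>ps. p) = 1 \<and>
        (\<forall>i<dA. \<forall>j<dB. \<forall>i'<dA. \<forall>j'<dB.
           \<rho> (i, j) (i', j') =
             (\<Sum>(p, u, v)\<leftarrow>ps. complex_of_real p * (u i * cnj (u i')) * (v j * cnj (v j')))))"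

text \<open>Memory-assisted setting.  Alice holds A (dim dA) and memory A' (dim mA); her joint
  index is i * mA + i' (i < dA, i' < mA); similarly for Bob.  The state rho (x) mu on
  (A A') (x) (B B'):\<close>
definition joint_in :: "nat \<Rightarrow> nat \<Rightarrow> bop \<Rightarrow> bop \<Rightarrow> bop" where
  "joint_in mA mB \<rho> \<mu> = (\<lambda>(x, y) (x', y').
     \<rho> (x div mA, y div mB) (x' div mA, y' div mB) * \<mu> (x mod mA, y mod mB) (x' mod mA, y' mod mB))"

text \<open>A strategy maps the classical history (the leaves obtained in earlier rounds) to
  the LOCC protocol of the current round (leaves from (A A')(B B') to A' B') together
  with the guess attached to each leaf (True = guess 1).\<close>
type_synonym strategy = "nat list \<Rightarrow> (cmat \<times> cmat) list \<times> (nat \<Rightarrow> bool)"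

definition valid_strategy :: "nat \<Rightarrow> nat \<Rightarrow> nat \<Rightarrow> nat \<Rightarrow> strategy \<Rightarrow> bool" where
  "valid_strategy dA dB mA mB S \<longleftrightarrow> (\<forall>h. locc (dA * mA) (dB * mB) mA mB (fst (S h)))"

definition mem_update :: "nat \<Rightarrow> nat \<Rightarrow> nat \<Rightarrow> nat \<Rightarrow> cmat \<times> cmat \<Rightarrow> bop \<Rightarrow> bop \<Rightarrow> bop" where
  "mem_update dA dB mA mB K \<rho> \<mu> = kraus_apply (dA * mA) (dB * mB) (fst K) (snd K) (joint_in mA mB \<rho> \<mu>)"

text \<open>succ_prob ... h mu n t: probability (weighted by the unnormalised memory state mu
  reached after history h) that in the next n rounds, with Z_j i.i.d. uniform, the number
  of correct guesses is at least t.\<close>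
fun succ_prob :: "nat \<Rightarrow> nat \<Rightarrow> nat \<Rightarrow> nat \<Rightarrow> bop \<Rightarrow> bop \<Rightarrow> strategy \<Rightarrow> nat list \<Rightarrow> bop \<Rightarrow> nat \<Rightarrow> real \<Rightarrow> real" where
  "succ_prob dA dB mA mB \<rho>0 \<rho>1 S h \<mu> 0 t = (if t \<le> 0 then Re (btrace mA mB \<mu>) else 0)"
| "succ_prob dA dB mA mB \<rho>0 \<rho>1 S h \<mu> (Suc n) t =
     (\<Sum>z\<in>(UNIV :: bool set). (1/2) *
        (\<Sum>l<length (fst (S h)).
           succ_prob dA dB mA mB \<rho>0 \<rho>1 S (h @ [l])
             (mem_update dA dB mA mB (fst (S h) ! l) (if z then \<rho>1 else \<rho>0) \<mu>) n
             (t - (if snd (S h) l = z then 1 else 0))))"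

definition achievable :: "nat \<Rightarrow> nat \<Rightarrow> nat \<Rightarrow> nat \<Rightarrow> bop \<Rightarrow> bop \<Rightarrow> bop \<Rightarrow> strategy \<Rightarrow> real \<Rightarrow> bool" where
  "achievable dA dB mA mB \<rho>0 \<rho>1 \<mu>1 S r \<longleftrightarrow>
     (\<forall>\<epsilon>>0. \<forall>m::nat>0. \<exists>n\<ge>m. succ_prob dA dB mA mB \<rho>0 \<rho>1 S [] \<mu>1 n (r * real n) \<ge> 1 - \<epsilon>)"

definition R_mem :: "nat \<Rightarrow> nat \<Rightarrow> bop \<Rightarrow> bop \<Rightarrow> real" where
  "R_mem dA dB \<rho>0 \<rho>1 = Sup {r. \<exists>mA mB \<mu>1 S. 0 < mA \<and> 0 < mB \<and> density mA mB \<mu>1 \<and>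
       valid_strategy dA dB mA mB S \<and> achievable dA dB mA mB \<rho>0 \<rho>1 \<mu>1 S r}"

end

theory Submission
  imports Defs
begin

lemma swap4: "(\<Sum>k\<in>A. \<Sum>l\<in>B. \<Sum>x\<in>C. \<Sum>y\<in>D. f k l x y) = (\<Sum>x\<in>C. \<Sum>y\<in>D. \<Sum>k\<in>A. \<Sum>l\<in>B. f k l x y)"
proof -
  have "(\<Sum>k\<in>A. \<Sum>l\<in>B. \<Sum>x\<in>C. \<Sum>y\<in>D. f k l x y) = (\<Sum>k\<in>A. \<Sum>x\<in>C. \<Sum>y\<in>D. \<Sum>l\<in>B. f k l x y)"
  proof (rule sum.cong[OF refl])
    fix k
    have "(\<Sum>l\<in>B. \<Sum>x\<in>C. \<Sum>y\<in>D. f k l x y) = (\<Sum>x\<in>C. \<Sum>l\<in>B. \<Sum>y\<in>D. f k l x y)" by (rule sum.swap)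
    also have "\<dots> = (\<Sum>x\<in>C. \<Sum>y\<in>D. \<Sum>l\<in>B. f k l x y)" by (rule sum.cong[OF refl], rule sum.swap)
    finally show "(\<Sum>l\<in>B. \<Sum>x\<in>C. \<Sum>y\<in>D. f k l x y) = (\<Sum>x\<in>C. \<Sum>y\<in>D. \<Sum>l\<in>B. f k l x y)" .
  qed
  also have "\<dots> = (\<Sum>x\<in>C. \<Sum>k\<in>A. \<Sum>y\<in>D. \<Sum>l\<in>B. f k l x y)" by (rule sum.swap)
  also have "\<dots> = (\<Sum>x\<in>C. \<Sum>y\<in>D. \<Sum>k\<in>A. \<Sum>l\<in>B. f k l x y)" by (rule sum.cong[OF refl], rule sum.swap)
  finally show ?thesis .
qed

definition vn2 :: "nat \<Rightarrow> (nat \<Rightarrow> complex) \<Rightarrow> real" where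
  "vn2 n w = (\<Sum>i<n. (cmod (w i))^2)"
definition app :: "nat \<Rightarrow> cmat \<Rightarrow> (nat \<Rightarrow> complex) \<Rightarrow> nat \<Rightarrow> complex" where
  "app n K w = (\<lambda>i. \<Sum>x<n. K i x * w x)"

lemma vn2_nonneg: "0 \<le> vn2 n w" by (simp add: vn2_def sum_nonneg)

lemma vn2_complex: "complex_of_real (vn2 n w) = (\<Sum>i<n. cnj (w i) * w i)"
  unfolding vn2_def of_real_sum
  by (rule sum.cong[OF refl], simp only: complex_norm_square mult.commute)

lemma app_mmul: "app a (mmul a1 X K) w = app a1 X (app a K w)"
proof (rule ext)
  fix i
  have "app a (mmul a1 X K) w i = (\<Sum>x<a. \<Sum>l<a1. X i l * K l x * w x)"
    by (simp add: app_def mmul_def sum_distrib_right)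
  also have "\<dots> = (\<Sum>l<a1. \<Sum>x<a. X i l * K l x * w x)" by (rule sum.swap)
  also have "\<dots> = app a1 X (app a K w) i"
    by (simp add: app_def sum_distrib_left mult.assoc)
  finally show "app a (mmul a1 X K) w i = app a1 X (app a K w) i" .
qed

lemma sum_list_idx: "(\<Sum>x\<leftarrow>xs. f x) = (\<Sum>k<length xs. f (xs ! k))"
  by (simp add: sum_list_sum_nth atLeast0LessThan)

lemma norm_app_expand:
  "complex_of_real (vn2 a1 (app a K w)) = (\<Sum>l<a1. \<Sum>x<a. \<Sum>y<a. (cnj (K l x) * K l y) * (cnj (w x) * w y))"
proof -
  have "complex_of_real (vn2 a1 (app a K w)) = (\<Sum>l<a1. cnj (\<Sum>x<a. K l x * w x) * (\<Sum>y<a. K l y * w y))"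
    by (simp add: vn2_complex app_def)
  also have "\<dots> = (\<Sum>l<a1. \<Sum>x<a. \<Sum>y<a. (cnj (K l x) * K l y) * (cnj (w x) * w y))"
    unfolding cnj_sum sum_product by (simp add: mult_ac)
  finally show ?thesis .
qed

lemma kc_norm:
  assumes "kraus_complete a a1 Ks"
  shows "(\<Sum>K\<leftarrow>Ks. vn2 a1 (app a K w)) = vn2 a w"
proof -
  have kc: "\<And>x y. x < a \<Longrightarrow> y < a \<Longrightarrow> (\<Sum>k<length Ks. \<Sum>l<a1. cnj ((Ks!k) l x) * (Ks!k) l y) = (if x = y then 1 else 0)"
    using assms unfolding kraus_complete_def by (simp add: sum_list_idx)
  have "complex_of_real (\<Sum>K\<leftarrow>Ks. vn2 a1 (app a K w))
      = (\<Sum>k<length Ks. \<Sum>l<a1. \<Sum>x<a. \<Sum>y<a. (cnj ((Ks!k) l x) * (Ks!k) l y) * (cnj (w x) * w y))"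
    by (simp add: sum_list_idx norm_app_expand)
  also have "\<dots> = (\<Sum>x<a. \<Sum>y<a. \<Sum>k<length Ks. \<Sum>l<a1. (cnj ((Ks!k) l x) * (Ks!k) l y) * (cnj (w x) * w y))"
    by (rule swap4)
  also have "\<dots> = (\<Sum>x<a. \<Sum>y<a. (\<Sum>k<length Ks. \<Sum>l<a1. cnj ((Ks!k) l x) * (Ks!k) l y) * (cnj (w x) * w y))"
    by (simp add: sum_distrib_right)
  also have "\<dots> = (\<Sum>x<a. \<Sum>y<a. (if x = y then 1 else 0) * (cnj (w x) * w y))"
    by (intro sum.cong refl, simp add: kc)
  also have "\<dots> = complex_of_real (vn2 a w)"
  proof -
    have eq: "\<And>x y (c::complex). (if x = y then 1 else 0) * c = (if x = y then c else 0)" by simp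
    show ?thesis by (simp only: eq vn2_complex, simp)
  qed
  finally show ?thesis by (simp only: of_real_eq_iff)
qed

lemma sum_list_map_concat: "sum_list (map f (concat xss)) = sum_list (map (\<lambda>xs. sum_list (map f xs)) xss)"
  by (induction xss) auto

lemma vn2_app_idm: "vn2 n (app n idm u) = vn2 n u"
proof -
  have "\<And>i. i < n \<Longrightarrow> app n idm u i = u i"
    by (simp add: app_def idm_def if_distrib[of "\<lambda>t. t * _"] cong: if_cong)
  then show ?thesis unfolding vn2_def by simp
qed

lemma kc_norm_idx:
  assumes "kraus_complete a a1 Ks"
  shows "(\<Sum>k<length Ks. vn2 a1 (app a (Ks!k) w)) = vn2 a w"
  using kc_norm[OF assms, of w] by (simp add: sum_list_idx)

lemma locc_comp:
  assumes "locc a b a' b' L"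
  shows "(\<Sum>l\<leftarrow>L. vn2 a' (app a (fst l) u) * vn2 b' (app b (snd l) v)) = vn2 a u * vn2 b v"
  using assms
proof (induction arbitrary: u v rule: locc.induct)
  case (triv a b)
  then show ?case by (simp add: vn2_app_idm)
next
  case (alice a a1 Ks Ps b a' b')
  have "(\<Sum>l\<leftarrow>concat (map (\<lambda>k. map (\<lambda>(X, Y). (mmul a1 X (Ks ! k), Y)) (Ps ! k)) [0..<length Ks]).
          vn2 a' (app a (fst l) u) * vn2 b' (app b (snd l) v))
      = (\<Sum>k\<leftarrow>[0..<length Ks]. \<Sum>l\<leftarrow>Ps ! k. vn2 a' (app a1 (fst l) (app a (Ks!k) u)) * vn2 b' (app b (snd l) v))"
    by (simp add: sum_list_map_concat o_def case_prod_beta app_mmul)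
  also have "\<dots> = (\<Sum>k\<leftarrow>[0..<length Ks]. vn2 a1 (app a (Ks!k) u) * vn2 b v)"
    using alice.IH by (intro arg_cong[where f=sum_list] map_cong refl) auto
  also have "\<dots> = vn2 a u * vn2 b v"
    using kc_norm_idx[OF alice.hyps(1), of u]
    by (simp add: sum_list_idx sum_distrib_right[symmetric])
  finally show ?case .
next
  case (bob b b1 Ks Ps a a' b')
  have "(\<Sum>l\<leftarrow>concat (map (\<lambda>k. map (\<lambda>(X, Y). (X, mmul b1 Y (Ks ! k))) (Ps ! k)) [0..<length Ks]).
          vn2 a' (app a (fst l) u) * vn2 b' (app b (snd l) v))
      = (\<Sum>k\<leftarrow>[0..<length Ks]. \<Sum>l\<leftarrow>Ps ! k. vn2 a' (app a (fst l) u) * vn2 b' (app b1 (snd l) (app b (Ks!k) v)))"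
    by (simp add: sum_list_map_concat o_def case_prod_beta app_mmul)
  also have "\<dots> = (\<Sum>k\<leftarrow>[0..<length Ks]. vn2 a u * vn2 b1 (app b (Ks!k) v))"
    using bob.IH by (intro arg_cong[where f=sum_list] map_cong refl) auto
  also have "\<dots> = vn2 a u * vn2 b v"
    using kc_norm_idx[OF bob.hyps(1), of v]
    by (simp add: sum_list_idx sum_distrib_left[symmetric])
  finally show ?case .
qed

lemma mmul_assoc: "mmul n (mmul m A B) C = mmul m A (mmul n B C)"
proof (intro ext)
  fix i j
  have "mmul n (mmul m A B) C i j = (\<Sum>l<n. \<Sum>p<m. A i p * B p l * C l j)"
    by (simp add: mmul_def sum_distrib_right)
  also have "\<dots> = (\<Sum>p<m. \<Sum>l<n. A i p * B p l * C l j)" by (rule sum.swap)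
  also have "\<dots> = mmul m A (mmul n B C) i j"
    by (simp add: mmul_def sum_distrib_left mult.assoc)
  finally show "mmul n (mmul m A B) C i j = mmul m A (mmul n B C) i j" .
qed

lemma kc_comp:
  assumes K: "kraus_complete a a1 Ks" and V: "kraus_complete a0 a [V]"
  shows "kraus_complete a0 a1 (map (\<lambda>K. mmul a K V) Ks)"
  unfolding kraus_complete_def
proof (intro allI impI)
  fix i j assume ij: "i < a0" "j < a0"
  have kc: "\<And>x y. x < a \<Longrightarrow> y < a \<Longrightarrow> (\<Sum>k<length Ks. \<Sum>l<a1. cnj ((Ks!k) l x) * (Ks!k) l y) = (if x = y then 1 else 0)"
    using K unfolding kraus_complete_def by (simp add: sum_list_idx)
  have vc: "(\<Sum>l<a. cnj (V l i) * V l j) = (if i = j then 1 else 0)"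
    using V ij unfolding kraus_complete_def by simp
  have "(\<Sum>K\<leftarrow>map (\<lambda>K. mmul a K V) Ks. \<Sum>l<a1. cnj (K l i) * K l j)
      = (\<Sum>k<length Ks. \<Sum>l<a1. cnj (\<Sum>x<a. (Ks!k) l x * V x i) * (\<Sum>y<a. (Ks!k) l y * V y j))"
    unfolding sum_list_idx length_map by (intro sum.cong refl) (simp add: mmul_def)
  also have "\<dots> = (\<Sum>k<length Ks. \<Sum>l<a1. \<Sum>x<a. \<Sum>y<a. (cnj ((Ks!k) l x) * (Ks!k) l y) * (cnj (V x i) * V y j))"
    by (simp only: cnj_sum sum_product complex_cnj_mult) (simp add: mult_ac)
  also have "\<dots> = (\<Sum>x<a. \<Sum>y<a. \<Sum>k<length Ks. \<Sum>l<a1. (cnj ((Ks!k) l x) * (Ks!k) l y) * (cnj (V x i) * V y j))"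
    by (rule swap4)
  also have "\<dots> = (\<Sum>x<a. \<Sum>y<a. (\<Sum>k<length Ks. \<Sum>l<a1. cnj ((Ks!k) l x) * (Ks!k) l y) * (cnj (V x i) * V y j))"
    by (simp add: sum_distrib_right)
  also have "\<dots> = (\<Sum>x<a. \<Sum>y<a. (if x = y then 1 else 0) * (cnj (V x i) * V y j))"
    by (intro sum.cong refl, simp add: kc)
  also have "\<dots> = (\<Sum>l<a. cnj (V l i) * V l j)"
  proof -
    have eq: "\<And>x y (c::complex). (if x = y then 1 else 0) * c = (if x = y then c else 0)" by simp
    show ?thesis by (simp only: eq, simp)
  qed
  finally show "(\<Sum>K\<leftarrow>map (\<lambda>K. mmul a K V) Ks. \<Sum>l<a1. cnj (K l i) * K l j) = (if i = j then 1 else 0)"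
    using vc by simp
qed

lemma locc_iso_A:
  assumes "locc a b a' b' L" and "kraus_complete a0 a [V]"
  shows "locc a0 b a' b' (map (\<lambda>(X, Y). (mmul a X V, Y)) L)"
  using assms
proof (induction arbitrary: a0 V rule: locc.induct)
  case (triv a b)
  have "locc a0 b a b (concat (map (\<lambda>k. map (\<lambda>(X, Y). (mmul a X ([V] ! k), Y)) ([[(idm, idm)]] ! k)) [0..<length [V]]))"
    by (rule locc.alice) (use triv in \<open>auto intro: locc.triv\<close>)
  then show ?case by simp
next
  case (alice a a1 Ks Ps b a' b')
  have "locc a0 b a' b' (concat (map (\<lambda>k. map (\<lambda>(X, Y). (mmul a1 X ((map (\<lambda>K. mmul a K V) Ks) ! k), Y)) (Ps ! k)) [0..<length (map (\<lambda>K. mmul a K V) Ks)]))"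
    by (rule locc.alice) (use alice kc_comp in auto)
  moreover have "map (\<lambda>(X, Y). (mmul a X V, Y)) (concat (map (\<lambda>k. map (\<lambda>(X, Y). (mmul a1 X (Ks ! k), Y)) (Ps ! k)) [0..<length Ks]))
     = concat (map (\<lambda>k. map (\<lambda>(X, Y). (mmul a1 X ((map (\<lambda>K. mmul a K V) Ks) ! k), Y)) (Ps ! k)) [0..<length (map (\<lambda>K. mmul a K V) Ks)])"
    apply (simp add: map_concat o_def case_prod_beta mmul_assoc)
    apply (rule arg_cong[where f=concat], rule map_cong[OF refl])
    apply (auto simp: case_prod_beta)
    done
  ultimately show ?case by simp
next
  case (bob b b1 Ks Ps a a' b')
  have "locc a0 b a' b' (concat (map (\<lambda>k. map (\<lambda>(X, Y). (X, mmul b1 Y (Ks ! k))) ((map (map (\<lambda>(X, Y). (mmul a X V, Y))) Ps) ! k)) [0..<length Ks]))"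
    by (rule locc.bob) (use bob in auto)
  moreover have "map (\<lambda>(X, Y). (mmul a X V, Y)) (concat (map (\<lambda>k. map (\<lambda>(X, Y). (X, mmul b1 Y (Ks ! k))) (Ps ! k)) [0..<length Ks]))
     = concat (map (\<lambda>k. map (\<lambda>(X, Y). (X, mmul b1 Y (Ks ! k))) ((map (map (\<lambda>(X, Y). (mmul a X V, Y))) Ps) ! k)) [0..<length Ks])"
    using bob.hyps(2)
    apply (simp add: map_concat o_def case_prod_beta)
    apply (rule arg_cong[where f=concat], rule map_cong[OF refl])
    apply (auto simp: case_prod_beta)
    done
  ultimately show ?case by simp
qed

lemma locc_iso_B:
  assumes "locc a b a' b' L" and "kraus_complete b0 b [W]"
  shows "locc a b0 a' b' (map (\<lambda>(X, Y). (X, mmul b Y W)) L)"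
  using assms
proof (induction arbitrary: b0 W rule: locc.induct)
  case (triv a b)
  have "locc a b0 a b (concat (map (\<lambda>k. map (\<lambda>(X, Y). (X, mmul b Y ([W] ! k))) ([[(idm, idm)]] ! k)) [0..<length [W]]))"
    by (rule locc.bob) (use triv in \<open>auto intro: locc.triv\<close>)
  then show ?case by simp
next
  case (bob b b1 Ks Ps a a' b')
  have "locc a b0 a' b' (concat (map (\<lambda>k. map (\<lambda>(X, Y). (X, mmul b1 Y ((map (\<lambda>K. mmul b K W) Ks) ! k))) (Ps ! k)) [0..<length (map (\<lambda>K. mmul b K W) Ks)]))"
    by (rule locc.bob) (use bob kc_comp in auto)
  moreover have "map (\<lambda>(X, Y). (X, mmul b Y W)) (concat (map (\<lambda>k. map (\<lambda>(X, Y). (X, mmul b1 Y (Ks ! k))) (Ps ! k)) [0..<length Ks]))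
     = concat (map (\<lambda>k. map (\<lambda>(X, Y). (X, mmul b1 Y ((map (\<lambda>K. mmul b K W) Ks) ! k))) (Ps ! k)) [0..<length (map (\<lambda>K. mmul b K W) Ks)])"
    apply (simp add: map_concat o_def case_prod_beta mmul_assoc)
    apply (rule arg_cong[where f=concat], rule map_cong[OF refl])
    apply (auto simp: case_prod_beta)
    done
  ultimately show ?case by simp
next
  case (alice a a1 Ks Ps b a' b')
  have "locc a b0 a' b' (concat (map (\<lambda>k. map (\<lambda>(X, Y). (mmul a1 X (Ks ! k), Y)) ((map (map (\<lambda>(X, Y). (X, mmul b Y W))) Ps) ! k)) [0..<length Ks]))"
    by (rule locc.alice) (use alice in auto)
  moreover have "map (\<lambda>(X, Y). (X, mmul b Y W)) (concat (map (\<lambda>k. map (\<lambda>(X, Y). (mmul a1 X (Ks ! k), Y)) (Ps ! k)) [0..<length Ks]))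
     = concat (map (\<lambda>k. map (\<lambda>(X, Y). (mmul a1 X (Ks ! k), Y)) ((map (map (\<lambda>(X, Y). (X, mmul b Y W))) Ps) ! k)) [0..<length Ks])"
    using alice.hyps(2)
    apply (simp add: map_concat o_def case_prod_beta)
    apply (rule arg_cong[where f=concat], rule map_cong[OF refl])
    apply (auto simp: case_prod_beta)
    done
  ultimately show ?case by simp
qed

definition E1 :: "nat \<Rightarrow> cmat" where
  "E1 i = (\<lambda>r c. if r = 0 \<and> c = i then 1 else 0)"

definition pairs :: "nat \<Rightarrow> nat \<Rightarrow> (nat \<times> nat) list" where
  "pairs a b = concat (map (\<lambda>i. map (\<lambda>j. (i, j)) [0..<b]) [0..<a])"

definition tleaf :: "nat \<Rightarrow> nat \<Rightarrow> cmat \<times> cmat \<Rightarrow> (cmat \<times> cmat) list" where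
  "tleaf a' b' p = map (\<lambda>(i, j). (mmul a' (E1 i) (fst p), mmul b' (E1 j) (snd p))) (pairs a' b')"

lemma kc_E1: "kraus_complete a 1 (map E1 [0..<a])"
  unfolding kraus_complete_def
proof (intro allI impI)
  fix i j assume "i < a" "j < a"
  then show "(\<Sum>K\<leftarrow>map E1 [0..<a]. \<Sum>l<1. cnj (K l i) * K l j) = (if i = j then 1 else 0)"
  proof -
    have eq: "\<And>k. cnj (if i = k then 1 else 0) * (if j = k then 1 else (0::complex)) = (if k = i \<and> i = j then 1 else 0)"
      by auto
    show ?thesis using \<open>i < a\<close> by (simp add: sum_list_idx E1_def eq)
  qed
qed

lemma kc_E1': "kraus_complete a (Suc 0) (map E1 [0..<a])"
  using kc_E1 by simp

lemma mmul_E1_idm: "i < n \<Longrightarrow> mmul n (E1 i) idm = E1 i"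
  by (intro ext) (auto simp: mmul_def E1_def idm_def if_distrib[of "\<lambda>t. t * _"] cong: if_cong)

lemma mmul_1_idm_E1: "mmul 1 idm (E1 k) = E1 k"
  by (intro ext) (simp add: mmul_def E1_def idm_def)

lemma mmul_Suc0_idm_E1: "mmul (Suc 0) idm (E1 k) = E1 k"
  using mmul_1_idm_E1 by simp

lemma concat_map_concat: "concat (map f (concat xss)) = concat (map (\<lambda>xs. concat (map f xs)) xss)"
  by (induction xss) auto

lemma concat_map_comm:
  assumes "\<And>p. f (g p) = map g (f p)"
  shows "concat (map (f \<circ> g) P) = map g (concat (map f P))"
  using assms by (induction P) auto

lemma locc_discard_triv: "locc a b 1 1 (map (\<lambda>(i, j). (E1 i, E1 j)) (pairs a b))"
proof -
  define DB where "DB = concat (map (\<lambda>k. map (\<lambda>(X, Y). (X, mmul 1 Y ((map E1 [0..<b]) ! k))) ((replicate b [(idm, idm)]) ! k)) [0..<length (map E1 [0..<b])])"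
  have DB: "locc 1 b 1 1 DB"
    unfolding DB_def by (rule locc.bob) (auto simp: kc_E1 kc_E1' intro: locc.triv)
  have DB_eq: "DB = map (\<lambda>k. (idm, E1 k)) [0..<b]"
  proof -
    have "DB = concat (map (\<lambda>k. [(idm, E1 k)]) [0..<b])"
      unfolding DB_def length_map
      apply (intro arg_cong[where f=concat] map_cong refl)
      apply (simp_all add: mmul_1_idm_E1 mmul_Suc0_idm_E1)
      done
    then show ?thesis by (simp add: map_concat)
  qed
  define DA where "DA = concat (map (\<lambda>k. map (\<lambda>(X, Y). (mmul 1 X ((map E1 [0..<a]) ! k), Y)) ((replicate a DB) ! k)) [0..<length (map E1 [0..<a])])"
  have DA: "locc a b 1 1 DA"
    unfolding DA_def by (rule locc.alice) (use DB in \<open>auto simp: kc_E1 kc_E1'\<close>)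
  have "DA = concat (map (\<lambda>i. map (\<lambda>j. (E1 i, E1 j)) [0..<b]) [0..<a])"
    unfolding DA_def length_map
    by (intro arg_cong[where f=concat] map_cong refl) (simp_all add: DB_eq mmul_1_idm_E1 mmul_Suc0_idm_E1 case_prod_beta)
  also have "\<dots> = map (\<lambda>(i, j). (E1 i, E1 j)) (pairs a b)"
    by (simp add: pairs_def map_concat o_def)
  finally show ?thesis using DA by simp
qed

lemma concat_map_concat_upt: "concat (map f (concat (map F xs))) = concat (map (\<lambda>k. concat (map f (F k))) xs)"
  by (induction xs) auto

lemma tleaf_comm_A: "concat (map (tleaf a' b') (map (\<lambda>(X, Y). (mmul a1 X K, Y)) P)) = map (\<lambda>(X, Y). (mmul a1 X K, Y)) (concat (map (tleaf a' b') P))"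
  by (induction P) (auto simp: tleaf_def mmul_assoc case_prod_beta)

lemma tleaf_comm_B: "concat (map (tleaf a' b') (map (\<lambda>(X, Y). (X, mmul b1 Y K)) P)) = map (\<lambda>(X, Y). (X, mmul b1 Y K)) (concat (map (tleaf a' b') P))"
  by (induction P) (auto simp: tleaf_def mmul_assoc case_prod_beta)

lemma locc_discard:
  assumes "locc a b a' b' L"
  shows "locc a b 1 1 (concat (map (tleaf a' b') L))"
  using assms
proof (induction rule: locc.induct)
  case (triv a b)
  have "concat (map (tleaf a b) [(idm, idm)]) = map (\<lambda>(i, j). (E1 i, E1 j)) (pairs a b)"
    by (simp add: tleaf_def pairs_def map_concat o_def, intro arg_cong[where f=concat] map_cong refl) (simp add: mmul_E1_idm)
  then show ?case using locc_discard_triv by simp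
next
  case (alice a a1 Ks Ps b a' b')
  have "locc a b 1 1 (concat (map (\<lambda>k. map (\<lambda>(X, Y). (mmul a1 X (Ks ! k), Y)) ((map (\<lambda>P. concat (map (tleaf a' b') P)) Ps) ! k)) [0..<length Ks]))"
    by (rule locc.alice) (use alice in auto)
  moreover have "concat (map (tleaf a' b') (concat (map (\<lambda>k. map (\<lambda>(X, Y). (mmul a1 X (Ks ! k), Y)) (Ps ! k)) [0..<length Ks])))
     = concat (map (\<lambda>k. map (\<lambda>(X, Y). (mmul a1 X (Ks ! k), Y)) ((map (\<lambda>P. concat (map (tleaf a' b') P)) Ps) ! k)) [0..<length Ks])"
    unfolding concat_map_concat_upt
    apply (intro arg_cong[where f=concat] map_cong refl)
    apply (simp only: tleaf_comm_A)
    using alice.hyps(2) by simp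
  ultimately show ?case by simp
next
  case (bob b b1 Ks Ps a a' b')
  have "locc a b 1 1 (concat (map (\<lambda>k. map (\<lambda>(X, Y). (X, mmul b1 Y (Ks ! k))) ((map (\<lambda>P. concat (map (tleaf a' b') P)) Ps) ! k)) [0..<length Ks]))"
    by (rule locc.bob) (use bob in auto)
  moreover have "concat (map (tleaf a' b') (concat (map (\<lambda>k. map (\<lambda>(X, Y). (X, mmul b1 Y (Ks ! k))) (Ps ! k)) [0..<length Ks])))
     = concat (map (\<lambda>k. map (\<lambda>(X, Y). (X, mmul b1 Y (Ks ! k))) ((map (\<lambda>P. concat (map (tleaf a' b') P)) Ps) ! k)) [0..<length Ks])"
    unfolding concat_map_concat_upt
    apply (intro arg_cong[where f=concat] map_cong refl)
    apply (simp only: tleaf_comm_B)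
    using bob.hyps(2) by simp
  ultimately show ?case by simp
qed

definition pp :: "(nat \<Rightarrow> complex) \<Rightarrow> (nat \<Rightarrow> complex) \<Rightarrow> bop" where
  "pp u v = (\<lambda>(i, j) (i', j'). u i * cnj (u i') * (v j * cnj (v j')))"

definition tens :: "nat \<Rightarrow> (nat \<Rightarrow> complex) \<Rightarrow> (nat \<Rightarrow> complex) \<Rightarrow> nat \<Rightarrow> complex" where
  "tens m u a = (\<lambda>x. u (x div m) * a (x mod m))"

lemma pp_apply: "pp u v (i, j) (i', j') = u i * cnj (u i') * (v j * cnj (v j'))"
  by (simp add: pp_def)

lemma joint_pp: "joint_in mA mB (pp u v) (pp a b) = pp (tens mA u a) (tens mB v b)"
  by (intro ext) (auto simp: joint_in_def pp_def tens_def mult_ac)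

lemma kraus_pp: "kraus_apply a b KA KB (pp w w') = pp (app a KA w) (app b KB w')"
proof (intro ext)
  fix p q :: "nat \<times> nat"
  obtain i j where p: "p = (i, j)" by (cases p)
  obtain i' j' where q: "q = (i', j')" by (cases q)
  have "pp (app a KA w) (app b KB w') (i, j) (i', j')
      = (\<Sum>x<a. \<Sum>x'<a. (KA i x * w x) * cnj (KA i' x' * w x')) * (\<Sum>y<b. \<Sum>y'<b. (KB j y * w' y) * cnj (KB j' y' * w' y'))"
    unfolding pp_apply app_def cnj_sum sum_product by simp
  also have "\<dots> = (\<Sum>x<a. \<Sum>y<b. \<Sum>x'<a. \<Sum>y'<b. ((KA i x * w x) * cnj (KA i' x' * w x')) * ((KB j y * w' y) * cnj (KB j' y' * w' y')))"
    by (simp only: sum_product)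
  also have "\<dots> = kraus_apply a b KA KB (pp w w') (i, j) (i', j')"
    unfolding kraus_apply_def by (simp add: pp_apply mult_ac)
  finally show "kraus_apply a b KA KB (pp w w') p q = pp (app a KA w) (app b KB w') p q"
    using p q by simp
qed

lemma btrace_pp: "btrace a b (pp w w') = complex_of_real (vn2 a w * vn2 b w')"
proof -
  have "btrace a b (pp w w') = (\<Sum>i<a. cnj (w i) * w i) * (\<Sum>j<b. cnj (w' j) * w' j)"
    unfolding btrace_def pp_apply sum_product by (simp add: mult_ac)
  then show ?thesis by (simp add: vn2_complex)
qed

lemma kraus_add: "kraus_apply a b KA KB (\<lambda>p q. F p q + G p q) p q = kraus_apply a b KA KB F p q + kraus_apply a b KA KB G p q"
  by (simp add: kraus_apply_def case_prod_beta distrib_left distrib_right sum.distrib)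

lemma kraus_sum_pt:
  assumes "finite I"
  shows "kraus_apply a b KA KB (\<lambda>p q. \<Sum>k\<in>I. F k p q) p q = (\<Sum>k\<in>I. kraus_apply a b KA KB (F k) p q)"
  using assms
proof (induction I rule: finite_induct)
  case empty
  then show ?case by (simp add: kraus_apply_def)
next
  case (insert x I)
  then show ?case by (simp add: kraus_add)
qed

lemma kraus_sum:
  assumes "finite I"
  shows "kraus_apply a b KA KB (\<lambda>p q. \<Sum>k\<in>I. F k p q) = (\<lambda>p q. \<Sum>k\<in>I. kraus_apply a b KA KB (F k) p q)"
  using kraus_sum_pt[OF assms] by blast

lemma kraus_scale: "kraus_apply a b KA KB (\<lambda>p q. c * F p q) = (\<lambda>p q. c * kraus_apply a b KA KB F p q)"
  by (intro ext) (simp add: kraus_apply_def case_prod_beta sum_distrib_left mult_ac)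

lemma kraus_cong:
  assumes "\<And>x y x' y'. x < a \<Longrightarrow> y < b \<Longrightarrow> x' < a \<Longrightarrow> y' < b \<Longrightarrow> J (x, y) (x', y') = J' (x, y) (x', y')"
  shows "kraus_apply a b KA KB J = kraus_apply a b KA KB J'"
  unfolding kraus_apply_def using assms by (intro ext) (auto simp: case_prod_beta intro!: sum.cong)

lemma kraus_lin:
  assumes "finite I"
    and "\<And>x y x' y'. x < a \<Longrightarrow> y < b \<Longrightarrow> x' < a \<Longrightarrow> y' < b \<Longrightarrow>
           J (x, y) (x', y') = (\<Sum>k\<in>I. c k * F k (x, y) (x', y'))"
  shows "kraus_apply a b KA KB J = (\<lambda>p q. \<Sum>k\<in>I. c k * kraus_apply a b KA KB (F k) p q)"
proof -
  have "kraus_apply a b KA KB J = kraus_apply a b KA KB (\<lambda>p q. \<Sum>k\<in>I. c k * F k p q)"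
    using assms(2) by (intro kraus_cong) auto
  also have "\<dots> = (\<lambda>p q. \<Sum>k\<in>I. kraus_apply a b KA KB (\<lambda>p q. c k * F k p q) p q)"
    by (rule kraus_sum[OF assms(1)])
  also have "\<dots> = (\<lambda>p q. \<Sum>k\<in>I. c k * kraus_apply a b KA KB (F k) p q)"
    by (simp add: kraus_scale)
  finally show ?thesis .
qed

lemma mem_update_lin:
  assumes "finite I" and mA: "0 < mA" and mB: "0 < mB"
    and "\<And>i j i' j'. i < mA \<Longrightarrow> j < mB \<Longrightarrow> i' < mA \<Longrightarrow> j' < mB \<Longrightarrow>
           \<mu> (i, j) (i', j') = (\<Sum>k\<in>I. c k * \<nu> k (i, j) (i', j'))"
  shows "mem_update dA dB mA mB K \<rho> \<mu> = (\<lambda>p q. \<Sum>k\<in>I. c k * mem_update dA dB mA mB K \<rho> (\<nu> k) p q)"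
  unfolding mem_update_def
proof (rule kraus_lin[OF assms(1)])
  fix x y x' y'
  show "joint_in mA mB \<rho> \<mu> (x, y) (x', y') = (\<Sum>k\<in>I. c k * joint_in mA mB \<rho> (\<nu> k) (x, y) (x', y'))"
    using assms(4)[of "x mod mA" "y mod mB" "x' mod mA" "y' mod mB"] mA mB
    by (simp add: joint_in_def sum_distrib_left mult_ac)
qed

definition rep :: "nat \<Rightarrow> nat \<Rightarrow> bop \<Rightarrow> (real \<times> (nat \<Rightarrow> complex) \<times> (nat \<Rightarrow> complex)) list \<Rightarrow> bool" where
  "rep dA dB \<rho> ps \<longleftrightarrow> (\<forall>i<dA. \<forall>j<dB. \<forall>i'<dA. \<forall>j'<dB.
     \<rho> (i, j) (i', j') = (\<Sum>k<length ps. complex_of_real (fst (ps!k)) * pp (fst (snd (ps!k))) (snd (snd (ps!k))) (i, j) (i', j')))"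

definition good :: "nat \<Rightarrow> nat \<Rightarrow> (real \<times> (nat \<Rightarrow> complex) \<times> (nat \<Rightarrow> complex)) list \<Rightarrow> bool" where
  "good dA dB ps \<longleftrightarrow> (\<forall>k<length ps. 0 \<le> fst (ps!k) \<and> vn2 dA (fst (snd (ps!k))) = 1 \<and> vn2 dB (snd (snd (ps!k))) = 1)
     \<and> (\<Sum>k<length ps. fst (ps!k)) = 1"

lemma sep_rep:
  assumes "sep dA dB \<rho>"
  obtains ps where "rep dA dB \<rho> ps" "good dA dB ps"
proof -
  obtain ps :: "(real \<times> (nat \<Rightarrow> complex) \<times> (nat \<Rightarrow> complex)) list" where
    h1: "\<forall>(p, u, v)\<in>set ps. 0 \<le> p \<and> (\<Sum>i<dA. (cmod (u i))\<^sup>2) = 1 \<and> (\<Sum>j<dB. (cmod (v j))\<^sup>2) = 1" and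
    h2: "(\<Sum>(p, u, v)\<leftarrow>ps. p) = 1" and
    h3: "\<forall>i<dA. \<forall>j<dB. \<forall>i'<dA. \<forall>j'<dB. \<rho> (i, j) (i', j') =
             (\<Sum>(p, u, v)\<leftarrow>ps. complex_of_real p * (u i * cnj (u i')) * (v j * cnj (v j')))"
    using assms unfolding sep_def by blast
  have "rep dA dB \<rho> ps"
    unfolding rep_def using h3 by (simp add: sum_list_idx case_prod_beta pp_apply mult.assoc)
  moreover have "good dA dB ps"
    unfolding good_def
  proof
    show "\<forall>k<length ps. 0 \<le> fst (ps ! k) \<and> vn2 dA (fst (snd (ps ! k))) = 1 \<and> vn2 dB (snd (snd (ps ! k))) = 1"
    proof (intro allI impI)
      fix k assume "k < length ps"
      then have "ps ! k \<in> set ps" by simp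
      with h1 show "0 \<le> fst (ps ! k) \<and> vn2 dA (fst (snd (ps ! k))) = 1 \<and> vn2 dB (snd (snd (ps ! k))) = 1"
        unfolding vn2_def by (cases "ps ! k") auto
    qed
    show "(\<Sum>k<length ps. fst (ps ! k)) = 1" using h2 by (simp add: sum_list_idx case_prod_beta)
  qed
  ultimately show ?thesis using that by blast
qed

lemma div_lt: "x < d * m \<Longrightarrow> x div m < (d::nat)"
  by (simp add: less_mult_imp_div_less)

lemma mem_update_pp:
  assumes "rep dA dB \<rho> ps" and mA: "0 < mA" and mB: "0 < mB"
  shows "mem_update dA dB mA mB K \<rho> (pp a b) =
    (\<lambda>p q. \<Sum>k<length ps. complex_of_real (fst (ps!k)) *
        pp (app (dA * mA) (fst K) (tens mA (fst (snd (ps!k))) a)) (app (dB * mB) (snd K) (tens mB (snd (snd (ps!k))) b)) p q)"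
proof -
  have "mem_update dA dB mA mB K \<rho> (pp a b) =
     (\<lambda>p q. \<Sum>k<length ps. complex_of_real (fst (ps!k)) * kraus_apply (dA * mA) (dB * mB) (fst K) (snd K)
         (pp (tens mA (fst (snd (ps!k))) a) (tens mB (snd (snd (ps!k))) b)) p q)"
    unfolding mem_update_def
  proof (rule kraus_lin)
    fix x y x' y'
    assume xy: "x < dA * mA" "y < dB * mB" "x' < dA * mA" "y' < dB * mB"
    then have d: "x div mA < dA" "y div mB < dB" "x' div mA < dA" "y' div mB < dB"
      by (simp_all add: div_lt)
    have "joint_in mA mB \<rho> (pp a b) (x, y) (x', y') =
        \<rho> (x div mA, y div mB) (x' div mA, y' div mB) * pp a b (x mod mA, y mod mB) (x' mod mA, y' mod mB)"
      by (simp add: joint_in_def)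
    also have "\<dots> = (\<Sum>k<length ps. complex_of_real (fst (ps!k)) *
        (pp (fst (snd (ps!k))) (snd (snd (ps!k))) (x div mA, y div mB) (x' div mA, y' div mB) * pp a b (x mod mA, y mod mB) (x' mod mA, y' mod mB)))"
      using assms(1) d unfolding rep_def by (simp add: sum_distrib_right mult.assoc)
    also have "\<dots> = (\<Sum>k<length ps. complex_of_real (fst (ps!k)) * pp (tens mA (fst (snd (ps!k))) a) (tens mB (snd (snd (ps!k))) b) (x, y) (x', y'))"
      by (simp add: pp_apply tens_def mult_ac)
    finally show "joint_in mA mB \<rho> (pp a b) (x, y) (x', y') = (\<Sum>k<length ps. complex_of_real (fst (ps!k)) * pp (tens mA (fst (snd (ps!k))) a) (tens mB (snd (snd (ps!k))) b) (x, y) (x', y'))" .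
  qed simp
  then show ?thesis by (simp add: kraus_pp)
qed

lemma bool_sum_if: "(\<Sum>z\<in>(UNIV::bool set). (if g = z then x else 1) * f z) = f False + f True + (x - 1) * (f g::real)"
proof -
  have u: "(\<Sum>z\<in>(UNIV::bool set). F z) = F False + F True" for F :: "bool \<Rightarrow> real"
    by (simp add: UNIV_bool)
  show ?thesis by (cases g) (simp_all add: u left_diff_distrib)
qed

lemma abstract_upper:
  fixes sp :: "'h \<Rightarrow> 'v \<Rightarrow> nat \<Rightarrow> real \<Rightarrow> real" and N :: "'v \<Rightarrow> real"
    and L :: "'h \<Rightarrow> nat" and K :: "bool \<Rightarrow> nat" and w :: "bool \<Rightarrow> nat \<Rightarrow> real"
    and ch :: "'h \<Rightarrow> 'v \<Rightarrow> bool \<Rightarrow> nat \<Rightarrow> nat \<Rightarrow> 'v" and G :: "'h \<Rightarrow> nat \<Rightarrow> bool"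
    and nxt :: "'h \<Rightarrow> nat \<Rightarrow> 'h"
  assumes base: "\<And>h v t. sp h v 0 t = (if t \<le> 0 then N v else 0)"
    and step: "\<And>h v n t. sp h v (Suc n) t = (\<Sum>z\<in>(UNIV::bool set). (1/2) *
          (\<Sum>l<L h. \<Sum>k<K z. w z k * sp (nxt h l) (ch h v z l k) n (t - (if G h l = z then 1 else 0))))"
    and Nnn: "\<And>v. 0 \<le> N v" and wnn: "\<And>z k. k < K z \<Longrightarrow> 0 \<le> w z k"
    and cons: "\<And>h v z. (\<Sum>l<L h. \<Sum>k<K z. w z k * N (ch h v z l k)) = N v"
    and rb: "\<And>h v. (1/2) * (\<Sum>l<L h. \<Sum>k<K (G h l). w (G h l) k * N (ch h v (G h l) l k)) \<le> P * N v"
    and lam: "1 < lam" and P0: "0 \<le> P"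
  shows "0 \<le> sp h v n t \<and> sp h v n t \<le> N v * (1 + (lam - 1) * P) ^ n * lam powr (- t)"
proof (induction n arbitrary: h v t)
  case 0
  have "N v \<le> N v * lam powr (- t)" if "t \<le> 0"
  proof -
    have "1 \<le> lam powr (- t)" using lam that by (simp add: ge_one_powr_ge_zero)
    then show ?thesis using Nnn[of v] by (simp add: mult_le_cancel_left1)
  qed
  then show ?case using Nnn[of v] by (simp add: base)
next
  case (Suc n)
  define B where "B = (1 + (lam - 1) * P) ^ n * lam powr (- t)"
  have Bnn: "0 \<le> B" using lam P0 unfolding B_def
    by (intro mult_nonneg_nonneg zero_le_power) auto
  define W where "W z l = (\<Sum>k<K z. w z k * N (ch h v z l k))" for z l
  have pw: "lam powr (- (t - (if G h l = z then 1 else 0))) = lam powr (- t) * (if G h l = z then lam else 1)" for l z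
  proof -
    have "lam powr (- t + 1) = lam powr (- t) * lam" using lam powr_add[of lam "-t" 1] by simp
    moreover have "- t + 1 = 1 - t" by simp
    ultimately show ?thesis by (cases "G h l = z") simp_all
  qed
  have "sp h v (Suc n) t \<le> (\<Sum>z\<in>(UNIV::bool set). (1/2) *
          (\<Sum>l<L h. \<Sum>k<K z. w z k * (N (ch h v z l k) * (1 + (lam - 1) * P) ^ n * lam powr (- (t - (if G h l = z then 1 else 0))))))"
    unfolding step
  proof (intro sum_mono mult_left_mono)
    fix z l k
    show "sp (nxt h l) (ch h v z l k) n (t - (if G h l = z then 1 else 0))
        \<le> N (ch h v z l k) * (1 + (lam - 1) * P) ^ n * lam powr - (t - (if G h l = z then 1 else 0))"
      using Suc.IH by blast
  qed (auto simp: wnn)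
  also have "\<dots> = B * (\<Sum>l<L h. (1/2) * (\<Sum>z\<in>(UNIV::bool set). (if G h l = z then lam else 1) * W z l))"
    unfolding pw W_def B_def
    by (simp add: sum_distrib_left sum_distrib_right mult_ac sum.swap[of _ UNIV])
  also have "\<dots> = B * (\<Sum>l<L h. (1/2) * (W False l + W True l + (lam - 1) * W (G h l) l))"
    by (simp add: bool_sum_if)
  also have "\<dots> = B * ((1/2) * (\<Sum>l<L h. W False l) + (1/2) * (\<Sum>l<L h. W True l) + (lam - 1) * ((1/2) * (\<Sum>l<L h. W (G h l) l)))"
  proof -
    have "(\<Sum>l<L h. (1/2) * (W False l + W True l + (lam - 1) * W (G h l) l))
       = (1/2) * (\<Sum>l<L h. W False l) + (1/2) * (\<Sum>l<L h. W True l) + (lam - 1) * ((1/2) * (\<Sum>l<L h. W (G h l) l))"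
      unfolding sum_distrib_left sum.distrib[symmetric] by (rule sum.cong) (auto simp: field_simps)
    then show ?thesis by simp
  qed
  also have "\<dots> \<le> B * (N v + (lam - 1) * (P * N v))"
    using cons[where h=h and v=v and z=False] cons[where h=h and v=v and z=True] rb[where h=h and v=v] lam Bnn unfolding W_def
    by (intro mult_left_mono) auto
  also have "\<dots> = N v * (1 + (lam - 1) * P) ^ Suc n * lam powr (- t)"
    unfolding B_def by (simp add: algebra_simps)
  finally have up: "sp h v (Suc n) t \<le> N v * (1 + (lam - 1) * P) ^ Suc n * lam powr (- t)" .
  have "0 \<le> sp h v (Suc n) t"
    unfolding step using Suc.IH wnn
    by (intro sum_nonneg mult_nonneg_nonneg) auto
  with up show ?case by simp
qed

lemma abstract_lower:
  fixes sp :: "'h \<Rightarrow> 'v \<Rightarrow> nat \<Rightarrow> real \<Rightarrow> real" and N :: "'v \<Rightarrow> real"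
    and L :: "'h \<Rightarrow> nat" and K :: "bool \<Rightarrow> nat" and w :: "bool \<Rightarrow> nat \<Rightarrow> real"
    and ch :: "'h \<Rightarrow> 'v \<Rightarrow> bool \<Rightarrow> nat \<Rightarrow> nat \<Rightarrow> 'v" and G :: "'h \<Rightarrow> nat \<Rightarrow> bool"
    and nxt :: "'h \<Rightarrow> nat \<Rightarrow> 'h"
  assumes base: "\<And>h v t. sp h v 0 t = (if t \<le> 0 then N v else 0)"
    and step: "\<And>h v n t. sp h v (Suc n) t = (\<Sum>z\<in>(UNIV::bool set). (1/2) *
          (\<Sum>l<L h. \<Sum>k<K z. w z k * sp (nxt h l) (ch h v z l k) n (t - (if G h l = z then 1 else 0))))"
    and Nnn: "\<And>v. 0 \<le> N v" and wnn: "\<And>z k. k < K z \<Longrightarrow> 0 \<le> w z k"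
    and cons: "\<And>h v z. (\<Sum>l<L h. \<Sum>k<K z. w z k * N (ch h v z l k)) = N v"
    and rb: "\<And>h v. q * N v \<le> (1/2) * (\<Sum>l<L h. \<Sum>k<K (G h l). w (G h l) k * N (ch h v (G h l) l k))"
    and lam: "0 < lam" "lam < 1" and q: "q \<le> 1"
  shows "N v - sp h v n t \<le> N v * (1 - (1 - lam) * q) ^ n * lam powr (- t)"
proof (induction n arbitrary: h v t)
  case 0
  have "N v \<le> N v * lam powr (- t)" if "\<not> t \<le> 0"
  proof -
    have "lam powr t \<le> 1" using lam that by (intro powr_le1) auto
    moreover have "0 < lam powr t" using lam by simp
    ultimately have "1 \<le> lam powr (- t)" by (simp add: powr_minus one_le_inverse)
    then show ?thesis using Nnn[of v] by (simp add: mult_le_cancel_left1)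
  qed
  then show ?case using Nnn[of v] lam by (simp add: base)
next
  case (Suc n)
  define B where "B = (1 - (1 - lam) * q) ^ n * lam powr (- t)"
  have B1: "0 \<le> 1 - (1 - lam) * q"
  proof -
    have "(1 - lam) * q \<le> (1 - lam) * 1" using lam q by (intro mult_left_mono) auto
    then have "(1 - lam) * q \<le> 1 - lam" by simp
    then show ?thesis using lam by linarith
  qed
  have Bnn: "0 \<le> B" using lam B1 unfolding B_def
    by (intro mult_nonneg_nonneg zero_le_power) auto
  define W where "W z l = (\<Sum>k<K z. w z k * N (ch h v z l k))" for z l
  have pw: "lam powr (- (t - (if G h l = z then 1 else 0))) = lam powr (- t) * (if G h l = z then lam else 1)" for l z
  proof -
    have "lam powr (- t + 1) = lam powr (- t) * lam" using lam powr_add[of lam "-t" 1] by simp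
    moreover have "- t + 1 = 1 - t" by simp
    ultimately show ?thesis by (cases "G h l = z") simp_all
  qed
  have Nv: "N v = (\<Sum>z\<in>(UNIV::bool set). (1/2) * (\<Sum>l<L h. \<Sum>k<K z. w z k * N (ch h v z l k)))"
    using cons[where h=h and v=v] by (simp add: UNIV_bool)
  have "N v - sp h v (Suc n) t = (\<Sum>z\<in>(UNIV::bool set). (1/2) *
          (\<Sum>l<L h. \<Sum>k<K z. w z k * (N (ch h v z l k) - sp (nxt h l) (ch h v z l k) n (t - (if G h l = z then 1 else 0)))))"
    unfolding step by (subst Nv) (simp add: sum_subtractf right_diff_distrib)
  also have "\<dots> \<le> (\<Sum>z\<in>(UNIV::bool set). (1/2) *
          (\<Sum>l<L h. \<Sum>k<K z. w z k * (N (ch h v z l k) * (1 - (1 - lam) * q) ^ n * lam powr (- (t - (if G h l = z then 1 else 0))))))"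
  proof (intro sum_mono mult_left_mono)
    fix z l k
    show "N (ch h v z l k) - sp (nxt h l) (ch h v z l k) n (t - (if G h l = z then 1 else 0))
        \<le> N (ch h v z l k) * (1 - (1 - lam) * q) ^ n * lam powr - (t - (if G h l = z then 1 else 0))"
      using Suc.IH by blast
  qed (auto simp: wnn)
  also have "\<dots> = B * (\<Sum>l<L h. (1/2) * (\<Sum>z\<in>(UNIV::bool set). (if G h l = z then lam else 1) * W z l))"
    unfolding pw W_def B_def
    by (simp add: sum_distrib_left sum_distrib_right mult_ac sum.swap[of _ UNIV])
  also have "\<dots> = B * (\<Sum>l<L h. (1/2) * (W False l + W True l + (lam - 1) * W (G h l) l))"
    by (simp add: bool_sum_if)
  also have "\<dots> = B * ((1/2) * (\<Sum>l<L h. W False l) + (1/2) * (\<Sum>l<L h. W True l) + (lam - 1) * ((1/2) * (\<Sum>l<L h. W (G h l) l)))"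
  proof -
    have "(\<Sum>l<L h. (1/2) * (W False l + W True l + (lam - 1) * W (G h l) l))
       = (1/2) * (\<Sum>l<L h. W False l) + (1/2) * (\<Sum>l<L h. W True l) + (lam - 1) * ((1/2) * (\<Sum>l<L h. W (G h l) l))"
      unfolding sum_distrib_left sum.distrib[symmetric] by (rule sum.cong) (auto simp: field_simps)
    then show ?thesis by simp
  qed
  also have "\<dots> \<le> B * (N v + (lam - 1) * (q * N v))"
  proof (intro mult_left_mono Bnn)
    have "(lam - 1) * ((1/2) * (\<Sum>l<L h. W (G h l) l)) \<le> (lam - 1) * (q * N v)"
      using rb[where h=h and v=v] lam unfolding W_def by (intro mult_left_mono_neg) auto
    then show "(1/2) * (\<Sum>l<L h. W False l) + (1/2) * (\<Sum>l<L h. W True l) + (lam - 1) * ((1/2) * (\<Sum>l<L h. W (G h l) l))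
        \<le> N v + (lam - 1) * (q * N v)"
      using cons[where h=h and v=v and z=False] cons[where h=h and v=v and z=True] unfolding W_def by simp
  qed
  also have "\<dots> = N v * (1 - (1 - lam) * q) ^ Suc n * lam powr (- t)"
    unfolding B_def by (simp add: algebra_simps)
  finally show ?case .
qed

lemma exists_lam_up:
  fixes P r :: real
  assumes "P < r"
  shows "\<exists>lam>1. 1 + (lam - 1) * P < lam powr r"
proof -
  have d: "((\<lambda>x. x powr r) has_real_derivative r * 1 powr (r - 1)) (at 1)"
    by (rule has_real_derivative_powr) simp
  have d2: "((\<lambda>x. 1 + (x - 1) * P) has_real_derivative P) (at 1)"
    by (auto intro!: derivative_eq_intros)
  have "DERIV (\<lambda>x. (1 + (x - 1) * P) - x powr r) 1 :> P - r * 1 powr (r - 1)"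
    by (rule DERIV_diff[OF d2 d])
  then have "DERIV (\<lambda>x. (1 + (x - 1) * P) - x powr r) 1 :> P - r" by simp
  from DERIV_neg_dec_right[OF this] assms obtain d where d: "d > 0"
    and h: "\<And>h. h > 0 \<Longrightarrow> h < d \<Longrightarrow> (1 + (1 + h - 1) * P) - (1 + h) powr r < (1 + (1 - 1) * P) - 1 powr r"
    by auto
  have "(1 + (1 + d/2 - 1) * P) - (1 + d/2) powr r < 0" using h[of "d/2"] d by simp
  then show ?thesis using d by (intro exI[of _ "1 + d/2"]) auto
qed

lemma exists_lam_low:
  fixes q r :: real
  assumes "r < q"
  shows "\<exists>lam. 0 < lam \<and> lam < 1 \<and> 1 - (1 - lam) * q < lam powr r"
proof -
  have d: "((\<lambda>x. x powr r) has_real_derivative r * 1 powr (r - 1)) (at 1)"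
    by (rule has_real_derivative_powr) simp
  have d2: "((\<lambda>x. 1 - (1 - x) * q) has_real_derivative q) (at 1)"
    by (auto intro!: derivative_eq_intros)
  have "DERIV (\<lambda>x. (1 - (1 - x) * q) - x powr r) 1 :> q - r * 1 powr (r - 1)"
    by (rule DERIV_diff[OF d2 d])
  then have "DERIV (\<lambda>x. (1 - (1 - x) * q) - x powr r) 1 :> q - r" by simp
  from DERIV_pos_inc_left[OF this] assms obtain d where d: "d > 0"
    and h: "\<And>h. h > 0 \<Longrightarrow> h < d \<Longrightarrow> (1 - (1 - (1 - h)) * q) - (1 - h) powr r < (1 - (1 - 1) * q) - 1 powr r"
    by auto
  define h0 where "h0 = min (d/2) (1/2)"
  have h0: "0 < h0" "h0 < d" "h0 < 1" using d by (auto simp: h0_def)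
  have "(1 - (1 - (1 - h0)) * q) - (1 - h0) powr r < 0" using h[of h0] h0 by simp
  then show ?thesis using h0 by (intro exI[of _ "1 - h0"]) auto
qed

lemma sum_mult_split:
  fixes d m :: nat and f :: "nat \<Rightarrow> 'a::comm_monoid_add"
  shows "(\<Sum>x<d * m. f x) = (\<Sum>i<d. \<Sum>j<m. f (i * m + j))"
proof (induction d)
  case 0
  then show ?case by simp
next
  case (Suc d)
  have "(\<Sum>x<Suc d * m. f x) = (\<Sum>x\<in>{0..<d * m}. f x) + (\<Sum>x\<in>{d * m..<d * m + m}. f x)"
    using sum.atLeastLessThan_concat[of 0 "d * m" "d * m + m" f] by (simp add: atLeast0LessThan add.commute)
  also have "(\<Sum>x\<in>{d * m..<d * m + m}. f x) = (\<Sum>j<m. f (d * m + j))"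
    using sum.atLeastLessThan_shift_bounds[of f 0 "d * m" m] by (simp add: atLeast0LessThan o_def add.commute)
  finally show ?case using Suc by (simp add: atLeast0LessThan add.commute)
qed

lemma vn2_tens: "0 < m \<Longrightarrow> vn2 (d * m) (tens m u a) = vn2 d u * vn2 m a"
  unfolding vn2_def tens_def sum_mult_split
  by (simp add: norm_mult power_mult_distrib sum_product)

lemma succ_lin:
  assumes I: "finite I" and mA: "0 < mA" and mB: "0 < mB"
    and "\<And>i j i' j'. i < mA \<Longrightarrow> j < mB \<Longrightarrow> i' < mA \<Longrightarrow> j' < mB \<Longrightarrow>
           \<mu> (i, j) (i', j') = (\<Sum>k\<in>I. complex_of_real (c k) * \<nu> k (i, j) (i', j'))"
  shows "succ_prob dA dB mA mB \<rho>0 \<rho>1 S h \<mu> n t = (\<Sum>k\<in>I. c k * succ_prob dA dB mA mB \<rho>0 \<rho>1 S h (\<nu> k) n t)"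
  using assms(4)
proof (induction n arbitrary: h \<mu> \<nu> t)
  case 0
  have "btrace mA mB \<mu> = (\<Sum>i<mA. \<Sum>j<mB. \<Sum>k\<in>I. complex_of_real (c k) * \<nu> k (i, j) (i, j))"
    unfolding btrace_def by (intro sum.cong refl) (simp add: 0)
  also have "\<dots> = (\<Sum>k\<in>I. \<Sum>i<mA. \<Sum>j<mB. complex_of_real (c k) * \<nu> k (i, j) (i, j))"
  proof -
    have "(\<Sum>i<mA. \<Sum>j<mB. \<Sum>k\<in>I. complex_of_real (c k) * \<nu> k (i, j) (i, j))
        = (\<Sum>i<mA. \<Sum>k\<in>I. \<Sum>j<mB. complex_of_real (c k) * \<nu> k (i, j) (i, j))"
      by (intro sum.cong refl) (rule sum.swap)
    also have "\<dots> = (\<Sum>k\<in>I. \<Sum>i<mA. \<Sum>j<mB. complex_of_real (c k) * \<nu> k (i, j) (i, j))"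
      by (rule sum.swap)
    finally show ?thesis .
  qed
  also have "\<dots> = (\<Sum>k\<in>I. complex_of_real (c k) * btrace mA mB (\<nu> k))"
    unfolding btrace_def by (simp add: sum_distrib_left)
  finally have bt: "btrace mA mB \<mu> = (\<Sum>k\<in>I. complex_of_real (c k) * btrace mA mB (\<nu> k))" .
  show ?case by (simp add: bt Re_sum sum_distrib_left)
next
  case (Suc n)
  let ?K = "\<lambda>l. fst (S h) ! l"
  let ?r = "\<lambda>z::bool. if z then \<rho>1 else \<rho>0"
  let ?d = "\<lambda>l z. if snd (S h) l = z then 1 else 0"
  have mu: "mem_update dA dB mA mB (?K l) (?r z) \<mu> = (\<lambda>p q. \<Sum>k\<in>I. complex_of_real (c k) * mem_update dA dB mA mB (?K l) (?r z) (\<nu> k) p q)" for l z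
    by (rule mem_update_lin[OF I mA mB]) (simp add: Suc.prems)
  have ih: "succ_prob dA dB mA mB \<rho>0 \<rho>1 S (h @ [l]) (mem_update dA dB mA mB (?K l) (?r z) \<mu>) n t'
      = (\<Sum>k\<in>I. c k * succ_prob dA dB mA mB \<rho>0 \<rho>1 S (h @ [l]) (mem_update dA dB mA mB (?K l) (?r z) (\<nu> k)) n t')" for l z t'
    unfolding mu by (rule Suc.IH) simp
  have "succ_prob dA dB mA mB \<rho>0 \<rho>1 S h \<mu> (Suc n) t
      = (\<Sum>z\<in>(UNIV::bool set). (1/2) * (\<Sum>l<length (fst (S h)). \<Sum>k\<in>I. c k *
           succ_prob dA dB mA mB \<rho>0 \<rho>1 S (h @ [l]) (mem_update dA dB mA mB (?K l) (?r z) (\<nu> k)) n (t - ?d l z)))"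
    by (simp only: succ_prob.simps ih)
  also have "\<dots> = (\<Sum>z\<in>(UNIV::bool set). \<Sum>k\<in>I. c k * ((1/2) * (\<Sum>l<length (fst (S h)).
           succ_prob dA dB mA mB \<rho>0 \<rho>1 S (h @ [l]) (mem_update dA dB mA mB (?K l) (?r z) (\<nu> k)) n (t - ?d l z))))"
  proof (rule sum.cong[OF refl])
    fix z
    have "(\<Sum>l<length (fst (S h)). \<Sum>k\<in>I. c k *
           succ_prob dA dB mA mB \<rho>0 \<rho>1 S (h @ [l]) (mem_update dA dB mA mB (?K l) (?r z) (\<nu> k)) n (t - ?d l z))
        = (\<Sum>k\<in>I. \<Sum>l<length (fst (S h)). c k *
           succ_prob dA dB mA mB \<rho>0 \<rho>1 S (h @ [l]) (mem_update dA dB mA mB (?K l) (?r z) (\<nu> k)) n (t - ?d l z))"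
      by (rule sum.swap)
    then show "(1/2) * (\<Sum>l<length (fst (S h)). \<Sum>k\<in>I. c k *
           succ_prob dA dB mA mB \<rho>0 \<rho>1 S (h @ [l]) (mem_update dA dB mA mB (?K l) (?r z) (\<nu> k)) n (t - ?d l z))
        = (\<Sum>k\<in>I. c k * ((1/2) * (\<Sum>l<length (fst (S h)).
           succ_prob dA dB mA mB \<rho>0 \<rho>1 S (h @ [l]) (mem_update dA dB mA mB (?K l) (?r z) (\<nu> k)) n (t - ?d l z))))"
      by (simp add: sum_distrib_left mult_ac)
  qed
  also have "\<dots> = (\<Sum>k\<in>I. \<Sum>z\<in>(UNIV::bool set). c k * ((1/2) * (\<Sum>l<length (fst (S h)).
           succ_prob dA dB mA mB \<rho>0 \<rho>1 S (h @ [l]) (mem_update dA dB mA mB (?K l) (?r z) (\<nu> k)) n (t - ?d l z))))"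
    by (rule sum.swap)
  also have "\<dots> = (\<Sum>k\<in>I. c k * succ_prob dA dB mA mB \<rho>0 \<rho>1 S h (\<nu> k) (Suc n) t)"
    by (simp only: succ_prob.simps sum_distrib_left)
  finally show ?case .
qed

definition chld :: "nat \<Rightarrow> nat \<Rightarrow> nat \<Rightarrow> nat \<Rightarrow> cmat \<times> cmat \<Rightarrow> (real \<times> (nat \<Rightarrow> complex) \<times> (nat \<Rightarrow> complex)) list \<Rightarrow>
    (nat \<Rightarrow> complex) \<times> (nat \<Rightarrow> complex) \<Rightarrow> nat \<Rightarrow> (nat \<Rightarrow> complex) \<times> (nat \<Rightarrow> complex)" where
  "chld dA dB mA mB K ps v k = (app (dA * mA) (fst K) (tens mA (fst (snd (ps ! k))) (fst v)),
                                app (dB * mB) (snd K) (tens mB (snd (snd (ps ! k))) (snd v)))"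

lemma succ_step_pp:
  assumes r0: "rep dA dB \<rho>0 ps0" and r1: "rep dA dB \<rho>1 ps1" and mA: "0 < mA" and mB: "0 < mB"
  shows "succ_prob dA dB mA mB \<rho>0 \<rho>1 S h (pp (fst v) (snd v)) (Suc n) t =
   (\<Sum>z\<in>(UNIV::bool set). (1/2) * (\<Sum>l<length (fst (S h)). \<Sum>k<length (if z then ps1 else ps0).
      fst ((if z then ps1 else ps0) ! k) * succ_prob dA dB mA mB \<rho>0 \<rho>1 S (h @ [l])
        (case chld dA dB mA mB (fst (S h) ! l) (if z then ps1 else ps0) v k of (a', b') \<Rightarrow> pp a' b') n
        (t - (if snd (S h) l = z then 1 else 0))))"
proof -
  have rz: "rep dA dB (if z then \<rho>1 else \<rho>0) (if z then ps1 else ps0)" for z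
    using r0 r1 by simp
  have inner: "succ_prob dA dB mA mB \<rho>0 \<rho>1 S (h @ [l])
      (mem_update dA dB mA mB (fst (S h) ! l) (if z then \<rho>1 else \<rho>0) (pp (fst v) (snd v))) n t'
    = (\<Sum>k<length (if z then ps1 else ps0).
      fst ((if z then ps1 else ps0) ! k) * succ_prob dA dB mA mB \<rho>0 \<rho>1 S (h @ [l])
        (case chld dA dB mA mB (fst (S h) ! l) (if z then ps1 else ps0) v k of (a', b') \<Rightarrow> pp a' b') n t')" for l z t'
    unfolding mem_update_pp[OF rz mA mB]
    by (rule succ_lin[OF _ mA mB]) (simp_all add: chld_def)
  show ?thesis by (simp only: succ_prob.simps inner)
qed

definition wsep :: "nat \<Rightarrow> nat \<Rightarrow> nat \<Rightarrow> nat \<Rightarrow> (real \<times> (nat \<Rightarrow> complex) \<times> (nat \<Rightarrow> complex)) list \<Rightarrow> cmat \<times> cmat \<Rightarrow> real" where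
  "wsep a b a' b' ps XY = (\<Sum>k<length ps. fst (ps ! k) *
      (vn2 a' (app a (fst XY) (fst (snd (ps ! k)))) * vn2 b' (app b (snd XY) (snd (snd (ps ! k))))))"

definition leafM :: "nat \<Rightarrow> nat \<Rightarrow> cmat \<times> cmat \<Rightarrow> bop" where
  "leafM a' b' XY = (\<lambda>(x, y) (x', y'). (\<Sum>i<a'. cnj (fst XY i x) * fst XY i x') * (\<Sum>j<b'. cnj (snd XY j y) * snd XY j y'))"

lemma Q4: "(\<Sum>x\<in>A. \<Sum>y\<in>B. \<Sum>x'\<in>A'. \<Sum>y'\<in>B'. F x x' * G y y') = (\<Sum>x\<in>A. \<Sum>x'\<in>A'. F x x') * (\<Sum>y\<in>B. \<Sum>y'\<in>B'. (G y y' :: complex))"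
  by (simp only: sum_product)

lemma trprod_add_X: "trprod a b M (\<lambda>p q. F p q + G p q) = trprod a b M F + trprod a b M G"
  by (simp add: trprod_def distrib_left sum.distrib)

lemma trprod_sum_X:
  assumes "finite I"
  shows "trprod a b M (\<lambda>p q. \<Sum>k\<in>I. F k p q) = (\<Sum>k\<in>I. trprod a b M (F k))"
  using assms
proof (induction I rule: finite_induct)
  case empty
  then show ?case by (simp add: trprod_def)
next
  case (insert x I)
  then show ?case by (simp add: trprod_add_X)
qed

lemma trprod_scale_X: "trprod a b M (\<lambda>p q. c * F p q) = c * trprod a b M F"
  by (simp add: trprod_def sum_distrib_left mult_ac)

lemma trprod_add_M: "trprod a b (\<lambda>p q. F p q + G p q) X = trprod a b F X + trprod a b G X"
  by (simp add: trprod_def distrib_right sum.distrib)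

lemma trprod_sum_M:
  assumes "finite I"
  shows "trprod a b (\<lambda>p q. \<Sum>k\<in>I. F k p q) X = (\<Sum>k\<in>I. trprod a b (F k) X)"
  using assms
proof (induction I rule: finite_induct)
  case empty
  then show ?case by (simp add: trprod_def)
next
  case (insert x I)
  then show ?case by (simp add: trprod_add_M)
qed

lemma trprod_cong_X:
  assumes "\<And>x y x' y'. x < a \<Longrightarrow> y < b \<Longrightarrow> x' < a \<Longrightarrow> y' < b \<Longrightarrow> X (x, y) (x', y') = X' (x, y) (x', y')"
  shows "trprod a b M X = trprod a b M X'"
  unfolding trprod_def using assms by (intro sum.cong refl) auto

lemma quad_norm: "(\<Sum>x<a. \<Sum>x'<a. (\<Sum>i<a'. cnj (K i x) * K i x') * (u x' * cnj (u x))) = complex_of_real (vn2 a' (app a K u))"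
proof -
  have "complex_of_real (vn2 a' (app a K u)) = (\<Sum>l<a'. \<Sum>x<a. \<Sum>y<a. (cnj (K l x) * K l y) * (cnj (u x) * u y))"
    by (rule norm_app_expand)
  also have "\<dots> = (\<Sum>x<a. \<Sum>l<a'. \<Sum>y<a. (cnj (K l x) * K l y) * (cnj (u x) * u y))" by (rule sum.swap)
  also have "\<dots> = (\<Sum>x<a. \<Sum>y<a. \<Sum>l<a'. (cnj (K l x) * K l y) * (cnj (u x) * u y))"
    by (rule sum.cong[OF refl], rule sum.swap)
  also have "\<dots> = (\<Sum>x<a. \<Sum>x'<a. (\<Sum>i<a'. cnj (K i x) * K i x') * (u x' * cnj (u x)))"
    by (simp add: sum_distrib_left sum_distrib_right mult_ac)
  finally show ?thesis by simp
qed

lemma trprod_leaf_pp: "trprod a b (leafM a' b' XY) (pp u v) = complex_of_real (vn2 a' (app a (fst XY) u) * vn2 b' (app b (snd XY) v))"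
proof -
  have "trprod a b (leafM a' b' XY) (pp u v) =
     (\<Sum>x<a. \<Sum>y<b. \<Sum>x'<a. \<Sum>y'<b. ((\<Sum>i<a'. cnj (fst XY i x) * fst XY i x') * (u x' * cnj (u x))) *
          ((\<Sum>j<b'. cnj (snd XY j y) * snd XY j y') * (v y' * cnj (v y))))"
    unfolding trprod_def leafM_def by (simp add: pp_apply mult_ac)
  also have "\<dots> = (\<Sum>x<a. \<Sum>x'<a. (\<Sum>i<a'. cnj (fst XY i x) * fst XY i x') * (u x' * cnj (u x))) *
       (\<Sum>y<b. \<Sum>y'<b. (\<Sum>j<b'. cnj (snd XY j y) * snd XY j y') * (v y' * cnj (v y)))"
    by (rule Q4)
  also have "\<dots> = complex_of_real (vn2 a' (app a (fst XY) u) * vn2 b' (app b (snd XY) v))"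
    by (simp add: quad_norm)
  finally show ?thesis .
qed

lemma povm_elem_eq: "povm_elem a' b' L lab c = (\<lambda>p q. \<Sum>l\<in>{l. l < length L \<and> lab l = c}. leafM a' b' (L ! l) p q)"
  by (intro ext) (auto simp: povm_elem_def leafM_def case_prod_beta)

lemma trprod_povm:
  assumes "rep dA dB \<rho> ps"
  shows "trprod dA dB (povm_elem a' b' L lab c) \<rho> = complex_of_real (\<Sum>l\<in>{l. l < length L \<and> lab l = c}. wsep dA dB a' b' ps (L ! l))"
proof -
  have fin: "finite {l. l < length L \<and> lab l = c}" by simp
  have "trprod dA dB (povm_elem a' b' L lab c) \<rho> = (\<Sum>l\<in>{l. l < length L \<and> lab l = c}. trprod dA dB (leafM a' b' (L ! l)) \<rho>)"
    unfolding povm_elem_eq by (rule trprod_sum_M[OF fin])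
  also have "\<dots> = (\<Sum>l\<in>{l. l < length L \<and> lab l = c}. complex_of_real (wsep dA dB a' b' ps (L ! l)))"
  proof (rule sum.cong[OF refl])
    fix l
    have "trprod dA dB (leafM a' b' (L ! l)) \<rho> = trprod dA dB (leafM a' b' (L ! l))
        (\<lambda>p q. \<Sum>k<length ps. complex_of_real (fst (ps ! k)) * pp (fst (snd (ps ! k))) (snd (snd (ps ! k))) p q)"
      using assms unfolding rep_def by (intro trprod_cong_X) auto
    also have "\<dots> = (\<Sum>k<length ps. complex_of_real (fst (ps ! k)) * trprod dA dB (leafM a' b' (L ! l)) (pp (fst (snd (ps ! k))) (snd (snd (ps ! k)))))"
      by (simp add: trprod_sum_X trprod_scale_X)
    also have "\<dots> = complex_of_real (wsep dA dB a' b' ps (L ! l))"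
      by (simp add: trprod_leaf_pp wsep_def)
    finally show "trprod dA dB (leafM a' b' (L ! l)) \<rho> = complex_of_real (wsep dA dB a' b' ps (L ! l))" .
  qed
  finally show ?thesis by simp
qed

lemma wsep_nonneg: "good dA dB ps \<Longrightarrow> 0 \<le> wsep a b a' b' ps XY"
  unfolding wsep_def good_def by (intro sum_nonneg mult_nonneg_nonneg) (auto simp: vn2_nonneg)

lemma wsep_total:
  assumes "locc dA dB a' b' L" "good dA dB ps"
  shows "(\<Sum>l<length L. wsep dA dB a' b' ps (L ! l)) = 1"
proof -
  have lc: "(\<Sum>l<length L. vn2 a' (app dA (fst (L ! l)) u) * vn2 b' (app dB (snd (L ! l)) v)) = vn2 dA u * vn2 dB v" for u v
    using locc_comp[OF assms(1), of u v] by (simp add: sum_list_idx)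
  have "(\<Sum>l<length L. wsep dA dB a' b' ps (L ! l))
      = (\<Sum>k<length ps. fst (ps ! k) * (\<Sum>l<length L. vn2 a' (app dA (fst (L ! l)) (fst (snd (ps ! k)))) * vn2 b' (app dB (snd (L ! l)) (snd (snd (ps ! k))))))"
    unfolding wsep_def by (subst sum.swap) (simp add: sum_distrib_left)
  also have "\<dots> = (\<Sum>k<length ps. fst (ps ! k))"
    using assms(2) unfolding good_def by (intro sum.cong refl) (simp add: lc)
  also have "\<dots> = 1" using assms(2) unfolding good_def by simp
  finally show ?thesis .
qed

definition Wc :: "nat \<Rightarrow> nat \<Rightarrow> nat \<Rightarrow> nat \<Rightarrow> (real \<times> (nat \<Rightarrow> complex) \<times> (nat \<Rightarrow> complex)) list \<Rightarrow> (cmat \<times> cmat) list \<Rightarrow> (nat \<Rightarrow> nat) \<Rightarrow> nat \<Rightarrow> real" where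
  "Wc dA dB a' b' ps L lab c = (\<Sum>l\<in>{l. l < length L \<and> lab l = c}. wsep dA dB a' b' ps (L ! l))"

lemma sum_by_label: "(\<Sum>l<length L. f l) = (\<Sum>c\<in>lab ` {..<length L}. \<Sum>l\<in>{l. l < length L \<and> lab l = c}. f l)"
  by (subst sum.image_gen[of "{..<length L}" f lab]) simp_all

lemma Wc_total:
  assumes "locc dA dB a' b' L" "good dA dB ps"
  shows "(\<Sum>c\<in>lab ` {..<length L}. Wc dA dB a' b' ps L lab c) = 1"
  using wsep_total[OF assms] unfolding Wc_def sum_by_label[where L=L and lab=lab] by simp

lemma success_by_label:
  "(\<Sum>l<length L. wsep dA dB a' b' (if G (lab l) then ps1 else ps0) (L ! l))
     = (\<Sum>c\<in>lab ` {..<length L}. if G c then Wc dA dB a' b' ps1 L lab c else Wc dA dB a' b' ps0 L lab c)"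
  unfolding sum_by_label[where L=L and lab=lab] Wc_def
  by (intro sum.cong refl) (auto intro!: sum.cong)

lemma trprod_diff: "trprod a b M (\<lambda>p q. X p q - Y p q) = trprod a b M X - trprod a b M Y"
  by (simp add: trprod_def right_diff_distrib sum_subtractf)

context
  fixes dA dB :: nat and \<rho>0 \<rho>1 :: bop and ps0 ps1
  assumes r0: "rep dA dB \<rho>0 ps0" and r1: "rep dA dB \<rho>1 ps1"
    and g0: "good dA dB ps0" and g1: "good dA dB ps1"
begin

lemma val_eq: "(\<Sum>c\<in>lab ` {..<length L}. cmod (trprod dA dB (povm_elem a' b' L lab c) (\<lambda>p q. \<rho>0 p q - \<rho>1 p q)))
   = (\<Sum>c\<in>lab ` {..<length L}. \<bar>Wc dA dB a' b' ps0 L lab c - Wc dA dB a' b' ps1 L lab c\<bar>)"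
  by (intro sum.cong refl) (simp only: trprod_diff trprod_povm[OF r0] trprod_povm[OF r1] Wc_def of_real_diff[symmetric] norm_of_real)

lemma val_le2:
  assumes "locc dA dB a' b' L"
  shows "(\<Sum>c\<in>lab ` {..<length L}. cmod (trprod dA dB (povm_elem a' b' L lab c) (\<lambda>p q. \<rho>0 p q - \<rho>1 p q))) \<le> 2"
proof -
  have nn: "0 \<le> Wc dA dB a' b' ps L lab c" if "good dA dB ps" for ps c
    unfolding Wc_def using that by (intro sum_nonneg) (simp add: wsep_nonneg)
  have "(\<Sum>c\<in>lab ` {..<length L}. \<bar>Wc dA dB a' b' ps0 L lab c - Wc dA dB a' b' ps1 L lab c\<bar>)
      \<le> (\<Sum>c\<in>lab ` {..<length L}. Wc dA dB a' b' ps0 L lab c + Wc dA dB a' b' ps1 L lab c)"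
    using nn[OF g0] nn[OF g1] by (intro sum_mono) (smt (verit))
  also have "\<dots> = 2" using Wc_total[OF assms g0] Wc_total[OF assms g1] by (simp add: sum.distrib)
  finally show ?thesis by (simp add: val_eq)
qed

definition valset where
  "valset = {(\<Sum>c\<in>lab ` {..<length L}. cmod (trprod dA dB (povm_elem a' b' L lab c) (\<lambda>p q. \<rho>0 p q - \<rho>1 p q)))
                           | a' b' L lab. locc dA dB a' b' L}"

lemma locc_norm_valset: "locc_norm dA dB (\<lambda>p q. \<rho>0 p q - \<rho>1 p q) = Sup valset"
  unfolding locc_norm_def valset_def by simp

lemma valset_bdd: "bdd_above valset"
  unfolding valset_def bdd_above_def using val_le2 by blast

lemma valset_ne: "valset \<noteq> {}"
  unfolding valset_def using locc.triv by blast

lemma val_le_norm: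
  assumes "locc dA dB a' b' L"
  shows "(\<Sum>c\<in>lab ` {..<length L}. cmod (trprod dA dB (povm_elem a' b' L lab c) (\<lambda>p q. \<rho>0 p q - \<rho>1 p q)))
     \<le> locc_norm dA dB (\<lambda>p q. \<rho>0 p q - \<rho>1 p q)"
  unfolding locc_norm_valset using assms by (intro cSup_upper valset_bdd) (auto simp: valset_def)

lemma norm_nonneg: "0 \<le> locc_norm dA dB (\<lambda>p q. \<rho>0 p q - \<rho>1 p q)"
  using val_le_norm[OF locc.triv, of "\<lambda>_. 0"] by (smt (verit) sum_nonneg norm_ge_zero)

lemma norm_le2: "locc_norm dA dB (\<lambda>p q. \<rho>0 p q - \<rho>1 p q) \<le> 2"
  unfolding locc_norm_valset using valset_ne val_le2 by (intro cSup_least) (auto simp: valset_def)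

lemma success_upper:
  assumes "locc dA dB a' b' L"
  shows "(1/2) * (\<Sum>l<length L. wsep dA dB a' b' (if g l then ps1 else ps0) (L ! l)) \<le> P_LOCC dA dB \<rho>0 \<rho>1"
proof -
  define lab where "lab l = (if g l then 1 else 0::nat)" for l
  define G where "G c = (c = (1::nat))" for c
  have gG: "g l = G (lab l)" for l by (simp add: lab_def G_def)
  let ?W0 = "Wc dA dB a' b' ps0 L lab" and ?W1 = "Wc dA dB a' b' ps1 L lab"
  have "(\<Sum>l<length L. wsep dA dB a' b' (if g l then ps1 else ps0) (L ! l))
      = (\<Sum>c\<in>lab ` {..<length L}. if G c then ?W1 c else ?W0 c)"
    unfolding gG by (rule success_by_label)
  also have "\<dots> \<le> (\<Sum>c\<in>lab ` {..<length L}. (?W0 c + ?W1 c + \<bar>?W0 c - ?W1 c\<bar>) / 2)"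
    by (intro sum_mono) auto
  also have "\<dots> = (1 + 1 + (\<Sum>c\<in>lab ` {..<length L}. \<bar>?W0 c - ?W1 c\<bar>)) / 2"
    using Wc_total[OF assms g0, of lab] Wc_total[OF assms g1, of lab]
    by (simp add: sum_divide_distrib[symmetric] sum.distrib)
  also have "\<dots> \<le> (2 + locc_norm dA dB (\<lambda>p q. \<rho>0 p q - \<rho>1 p q)) / 2"
    using val_le_norm[OF assms, of lab] by (simp add: val_eq)
  finally show ?thesis unfolding P_LOCC_def by simp
qed

lemma success_lower:
  fixes lab :: "nat \<Rightarrow> nat"
  assumes "locc dA dB a' b' L"
  defines "G \<equiv> \<lambda>c. Wc dA dB a' b' ps0 L lab c - Wc dA dB a' b' ps1 L lab c < 0"
  shows "(1/2) * (\<Sum>l<length L. wsep dA dB a' b' (if G (lab l) then ps1 else ps0) (L ! l))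
     = 1/2 + 1/4 * (\<Sum>c\<in>lab ` {..<length L}. cmod (trprod dA dB (povm_elem a' b' L lab c) (\<lambda>p q. \<rho>0 p q - \<rho>1 p q)))"
proof -
  let ?W0 = "Wc dA dB a' b' ps0 L lab" and ?W1 = "Wc dA dB a' b' ps1 L lab"
  have "(\<Sum>l<length L. wsep dA dB a' b' (if G (lab l) then ps1 else ps0) (L ! l))
      = (\<Sum>c\<in>lab ` {..<length L}. if G c then ?W1 c else ?W0 c)"
    by (rule success_by_label)
  also have "\<dots> = (\<Sum>c\<in>lab ` {..<length L}. (?W0 c + ?W1 c + \<bar>?W0 c - ?W1 c\<bar>) / 2)"
    unfolding G_def by (intro sum.cong refl) auto
  also have "\<dots> = (1 + 1 + (\<Sum>c\<in>lab ` {..<length L}. \<bar>?W0 c - ?W1 c\<bar>)) / 2"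
    using Wc_total[OF assms(1) g0, of lab] Wc_total[OF assms(1) g1, of lab]
    by (simp add: sum_divide_distrib[symmetric] sum.distrib)
  finally show ?thesis by (simp add: val_eq)
qed

end

definition Vm :: "nat \<Rightarrow> (nat \<Rightarrow> complex) \<Rightarrow> cmat" where
  "Vm m a = (\<lambda>x i. if x div m = i then a (x mod m) else 0)"

lemma app_tens_Vm: "app (d * m) K (tens m u a) = app d (mmul (d * m) K (Vm m a)) u"
proof (intro ext)
  fix r
  have "app d (mmul (d * m) K (Vm m a)) u r = (\<Sum>i<d. \<Sum>x<d * m. K r x * Vm m a x i * u i)"
    by (simp add: app_def mmul_def sum_distrib_right)
  also have "\<dots> = (\<Sum>x<d * m. \<Sum>i<d. K r x * Vm m a x i * u i)" by (rule sum.swap)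
  also have "\<dots> = (\<Sum>x<d * m. K r x * (u (x div m) * a (x mod m)))"
  proof (rule sum.cong[OF refl])
    fix x assume "x \<in> {..<d * m}"
    then have "x div m < d" by (simp add: div_lt)
    then show "(\<Sum>i<d. K r x * Vm m a x i * u i) = K r x * (u (x div m) * a (x mod m))"
      by (simp add: Vm_def if_distrib[of "\<lambda>t. t * _"] if_distrib[of "\<lambda>t. _ * t"] mult_ac cong: if_cong)
  qed
  also have "\<dots> = app (d * m) K (tens m u a) r" by (simp add: app_def tens_def)
  finally show "app (d * m) K (tens m u a) r = app d (mmul (d * m) K (Vm m a)) u r" by simp
qed

lemma if_sum_const: "(\<Sum>x\<in>A. if P then f x else 0) = (if P then sum f A else 0)"
  by simp

lemma kc_Vm:
  assumes "vn2 m a = 1" "0 < m"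
  shows "kraus_complete d (d * m) [Vm m a]"
  unfolding kraus_complete_def
proof (intro allI impI)
  fix i j assume ij: "i < d" "j < d"
  have "(\<Sum>K\<leftarrow>[Vm m a]. \<Sum>l<d * m. cnj (K l i) * K l j) = (\<Sum>i'<d. \<Sum>j'<m. cnj (Vm m a (i' * m + j') i) * Vm m a (i' * m + j') j)"
    by (simp add: sum_mult_split)
  also have "\<dots> = (\<Sum>i'<d. if i' = i \<and> i' = j then (\<Sum>j'<m. cnj (a j') * a j') else 0)"
  proof (rule sum.cong[OF refl])
    fix i' assume "i' \<in> {..<d}"
    have "(\<Sum>j'<m. cnj (Vm m a (i' * m + j') i) * Vm m a (i' * m + j') j)
        = (\<Sum>j'<m. if i' = i \<and> i' = j then cnj (a j') * a j' else 0)"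
      using assms(2) by (intro sum.cong refl) (auto simp: Vm_def)
    then show "(\<Sum>j'<m. cnj (Vm m a (i' * m + j') i) * Vm m a (i' * m + j') j)
        = (if i' = i \<and> i' = j then (\<Sum>j'<m. cnj (a j') * a j') else 0)"
      by (simp only: if_sum_const)
  qed
  also have "\<dots> = (if i = j then 1 else 0)"
  proof -
    have "(\<Sum>j'<m. cnj (a j') * a j') = 1" using assms(1) vn2_complex[of m a] by simp
    then show ?thesis using ij by (cases "i = j") (auto intro!: sum.neutral)
  qed
  finally show "(\<Sum>K\<leftarrow>[Vm m a]. \<Sum>l<d * m. cnj (K l i) * K l j) = (if i = j then 1 else 0)" .
qed

lemma tens_scale: "tens m u (\<lambda>i. c * a i) = (\<lambda>x. c * tens m u a x)"
  by (simp add: tens_def mult_ac)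

lemma app_scale: "app n K (\<lambda>x. c * w x) = (\<lambda>i. c * app n K w i)"
  by (simp add: app_def sum_distrib_left mult_ac)

lemma vn2_scale: "vn2 n (\<lambda>i. c * w i) = (cmod c)^2 * vn2 n w"
  by (simp add: vn2_def norm_mult power_mult_distrib sum_distrib_left)

lemma vn2_zero_imp: "vn2 n w = 0 \<Longrightarrow> i < n \<Longrightarrow> w i = 0"
  unfolding vn2_def by (subst (asm) sum_nonneg_eq_0_iff) auto

lemma vn2_chld_scale:
  assumes "a = (\<lambda>i. complex_of_real s * a0 i)"
  shows "vn2 m' (app (d * m) K (tens m u a)) = s\<^sup>2 * vn2 m' (app d (mmul (d * m) K (Vm m a0)) u)"
  unfolding assms tens_scale app_scale vn2_scale app_tens_Vm by simp

definition Nv :: "nat \<Rightarrow> nat \<Rightarrow> (nat \<Rightarrow> complex) \<times> (nat \<Rightarrow> complex) \<Rightarrow> real" where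
  "Nv mA mB v = vn2 mA (fst v) * vn2 mB (snd v)"

lemma Nv_nonneg: "0 \<le> Nv mA mB v"
  by (simp add: Nv_def vn2_nonneg)

lemma cons_pp:
  assumes L: "locc (dA * mA) (dB * mB) mA mB L" and g: "good dA dB ps" and mA: "0 < mA" and mB: "0 < mB"
  shows "(\<Sum>l<length L. \<Sum>k<length ps. fst (ps ! k) * Nv mA mB (chld dA dB mA mB (L ! l) ps v k)) = Nv mA mB v"
proof -
  have lc: "(\<Sum>l<length L. vn2 mA (app (dA * mA) (fst (L ! l)) w) * vn2 mB (app (dB * mB) (snd (L ! l)) w'))
      = vn2 (dA * mA) w * vn2 (dB * mB) w'" for w w'
    using locc_comp[OF L, of w w'] by (simp add: sum_list_idx)
  have "(\<Sum>l<length L. \<Sum>k<length ps. fst (ps ! k) * Nv mA mB (chld dA dB mA mB (L ! l) ps v k))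
      = (\<Sum>k<length ps. fst (ps ! k) * (\<Sum>l<length L. Nv mA mB (chld dA dB mA mB (L ! l) ps v k)))"
    by (subst sum.swap) (simp add: sum_distrib_left)
  also have "\<dots> = (\<Sum>k<length ps. fst (ps ! k) * Nv mA mB v)"
  proof (rule sum.cong[OF refl])
    fix k assume "k \<in> {..<length ps}"
    then have "vn2 dA (fst (snd (ps ! k))) = 1" "vn2 dB (snd (snd (ps ! k))) = 1" using g unfolding good_def by auto
    then show "fst (ps ! k) * (\<Sum>l<length L. Nv mA mB (chld dA dB mA mB (L ! l) ps v k)) = fst (ps ! k) * Nv mA mB v"
      by (simp add: Nv_def chld_def lc vn2_tens mA mB)
  qed
  also have "\<dots> = Nv mA mB v" using g unfolding good_def by (simp add: sum_distrib_right[symmetric])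
  finally show ?thesis .
qed

lemma rb_pp:
  assumes L: "locc (dA * mA) (dB * mB) mA mB L"
    and r0: "rep dA dB \<rho>0 ps0" and r1: "rep dA dB \<rho>1 ps1"
    and g0: "good dA dB ps0" and g1: "good dA dB ps1" and mA: "0 < mA" and mB: "0 < mB"
  shows "(1/2) * (\<Sum>l<length L. \<Sum>k<length (if g l then ps1 else ps0). fst ((if g l then ps1 else ps0) ! k) *
            Nv mA mB (chld dA dB mA mB (L ! l) (if g l then ps1 else ps0) v k))
         \<le> P_LOCC dA dB \<rho>0 \<rho>1 * Nv mA mB v"
proof -
  define \<omega> where "\<omega> ps l = (\<Sum>k<length ps. fst (ps ! k) * Nv mA mB (chld dA dB mA mB (L ! l) ps v k))" for ps l
  have \<omega>nn: "0 \<le> \<omega> ps l" if "good dA dB ps" for ps l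
    using that unfolding \<omega>_def good_def by (intro sum_nonneg mult_nonneg_nonneg Nv_nonneg) auto
  have lhs: "(\<Sum>l<length L. \<Sum>k<length (if g l then ps1 else ps0). fst ((if g l then ps1 else ps0) ! k) *
            Nv mA mB (chld dA dB mA mB (L ! l) (if g l then ps1 else ps0) v k)) = (\<Sum>l<length L. \<omega> (if g l then ps1 else ps0) l)"
    unfolding \<omega>_def by simp
  have P0: "1/2 \<le> P_LOCC dA dB \<rho>0 \<rho>1"
    using norm_nonneg[OF r0 r1 g0 g1] unfolding P_LOCC_def by simp
  show ?thesis
  proof (cases "Nv mA mB v = 0")
    case True
    have "(\<Sum>l<length L. \<omega> (if g l then ps1 else ps0) l) \<le> (\<Sum>l<length L. \<omega> ps0 l + \<omega> ps1 l)"
      using \<omega>nn[OF g0] \<omega>nn[OF g1] by (intro sum_mono) auto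
    also have "\<dots> = 0"
      using cons_pp[OF L g0 mA mB, of v] cons_pp[OF L g1 mA mB, of v] True
      by (simp add: sum.distrib \<omega>_def)
    finally show ?thesis using True lhs by simp
  next
    case False
    define \<alpha> where "\<alpha> = vn2 mA (fst v)"
    define \<beta> where "\<beta> = vn2 mB (snd v)"
    have ab: "0 < \<alpha>" "0 < \<beta>"
      using False vn2_nonneg[of mA "fst v"] vn2_nonneg[of mB "snd v"] unfolding \<alpha>_def \<beta>_def Nv_def
      by (auto simp: less_le)
    define a0 where "a0 = (\<lambda>i. complex_of_real (1 / sqrt \<alpha>) * fst v i)"
    define b0 where "b0 = (\<lambda>i. complex_of_real (1 / sqrt \<beta>) * snd v i)"
    have fa: "fst v = (\<lambda>i. complex_of_real (sqrt \<alpha>) * a0 i)"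
      using ab unfolding a0_def by (auto simp: mult.assoc[symmetric] of_real_mult[symmetric])
    have fb: "snd v = (\<lambda>i. complex_of_real (sqrt \<beta>) * b0 i)"
      using ab unfolding b0_def by (auto simp: mult.assoc[symmetric] of_real_mult[symmetric])
    have na: "vn2 mA a0 = 1" using ab unfolding a0_def vn2_scale \<alpha>_def[symmetric] by (simp add: power_divide norm_divide)
    have nb: "vn2 mB b0 = 1" using ab unfolding b0_def vn2_scale \<beta>_def[symmetric] by (simp add: power_divide norm_divide)
    define L2 where "L2 = map (\<lambda>(X, Y). (X, mmul (dB * mB) Y (Vm mB b0))) (map (\<lambda>(X, Y). (mmul (dA * mA) X (Vm mA a0), Y)) L)"
    have L2: "locc dA dB mA mB L2"
      unfolding L2_def by (rule locc_iso_B[OF locc_iso_A[OF L kc_Vm[OF na mA]] kc_Vm[OF nb mB]])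
    have len: "length L2 = length L" by (simp add: L2_def)
    have om: "\<omega> ps l = \<alpha> * \<beta> * wsep dA dB mA mB ps (L2 ! l)" if "l < length L" for ps l
    proof -
      have "L2 ! l = (mmul (dA * mA) (fst (L ! l)) (Vm mA a0), mmul (dB * mB) (snd (L ! l)) (Vm mB b0))"
        using that by (simp add: L2_def case_prod_beta)
      moreover have "Nv mA mB (chld dA dB mA mB (L ! l) ps v k) =
          \<alpha> * \<beta> * (vn2 mA (app dA (mmul (dA * mA) (fst (L ! l)) (Vm mA a0)) (fst (snd (ps ! k)))) *
                   vn2 mB (app dB (mmul (dB * mB) (snd (L ! l)) (Vm mB b0)) (snd (snd (ps ! k)))))" for k
        unfolding Nv_def chld_def fst_conv snd_conv
        using vn2_chld_scale[OF fa, of mA dA mA "fst (L ! l)" "fst (snd (ps ! k))"]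
              vn2_chld_scale[OF fb, of mB dB mB "snd (L ! l)" "snd (snd (ps ! k))"] ab
        by simp
      ultimately show ?thesis unfolding \<omega>_def wsep_def by (simp add: sum_distrib_left mult_ac)
    qed
    have "(1/2) * (\<Sum>l<length L. \<omega> (if g l then ps1 else ps0) l)
        = \<alpha> * \<beta> * ((1/2) * (\<Sum>l<length L2. wsep dA dB mA mB (if g l then ps1 else ps0) (L2 ! l)))"
      unfolding len by (simp add: om sum_distrib_left mult_ac)
    also have "\<dots> \<le> \<alpha> * \<beta> * P_LOCC dA dB \<rho>0 \<rho>1"
      using success_upper[OF r0 r1 g0 g1 L2, of g] ab by (intro mult_left_mono) auto
    finally show ?thesis using lhs unfolding Nv_def \<alpha>_def \<beta>_def by (simp add: mult_ac)
  qed
qed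

definition om :: "nat \<Rightarrow> complex" where
  "om s = (if s = 0 then 1 else if s = 1 then \<i> else if s = 2 then -1 else - \<i>)"

definition ev :: "nat \<Rightarrow> nat \<Rightarrow> nat \<Rightarrow> nat \<Rightarrow> complex" where
  "ev i s i' = (\<lambda>x. (if x = i then 1 else 0) + om s * (if x = i' then 1 else 0))"

lemma sum4: "(\<Sum>s<(4::nat). f s) = f 0 + f 1 + f 2 + (f 3 :: complex)"
  by (simp add: eval_nat_numeral)

lemma polar: "(\<Sum>s<4. om s * (ev i s i' x * cnj (ev i s i' x'))) = 4 * (if x = i \<and> x' = i' then 1 else 0)"
  unfolding sum4 by (cases "x = i"; cases "x = i'"; cases "x' = i"; cases "x' = i'") (auto simp: om_def ev_def algebra_simps)

lemma sum6: "(\<Sum>(i, j, i', j', s, s')\<in>A \<times> B \<times> C \<times> D \<times> E \<times> F. g i j i' j' s s') =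
   (\<Sum>i\<in>A. \<Sum>j\<in>B. \<Sum>i'\<in>C. \<Sum>j'\<in>D. \<Sum>s\<in>E. \<Sum>s'\<in>F. g i j i' j' s s')"
  by (simp add: sum.cartesian_product)

lemma ss4:
  fixes m :: complex
  shows "(\<Sum>s<(4::nat). \<Sum>s'<(4::nat). m * om s * om s' / 16 * (A s * B s')) = m / 16 * ((\<Sum>s<4. om s * A s) * (\<Sum>s'<4. om s' * B s'))"
proof -
  have "m / 16 * ((\<Sum>s<(4::nat). om s * A s) * (\<Sum>s'<(4::nat). om s' * B s')) = m / 16 * (\<Sum>s<(4::nat). \<Sum>s'<(4::nat). (om s * A s) * (om s' * B s'))"
    by (simp only: sum_product)
  also have "\<dots> = (\<Sum>s<(4::nat). \<Sum>s'<(4::nat). m / 16 * ((om s * A s) * (om s' * B s')))"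
    by (simp only: sum_distrib_left)
  also have "\<dots> = (\<Sum>s<(4::nat). \<Sum>s'<(4::nat). m * om s * om s' / 16 * (A s * B s'))"
    by (intro sum.cong refl) (simp add: mult_ac)
  finally show ?thesis by simp
qed

lemma delta4:
  assumes "x < (mA::nat)" "y < (mB::nat)" "x' < mA" "y' < mB"
  shows "(\<Sum>i<mA. \<Sum>j<mB. \<Sum>i'<mA. \<Sum>j'<mB. (f i j i' j' :: complex) * ((if x = i \<and> x' = i' then 1 else 0) * (if y = j \<and> y' = j' then 1 else 0))) = f x y x' y'"
proof -
  have e: "\<And>i j i' j'. f i j i' j' * ((if x = i \<and> x' = i' then 1 else 0) * (if y = j \<and> y' = j' then 1 else 0))
      = (if j' = y' then (if i' = x' then (if j = y then (if i = x then f i j i' j' else 0) else 0) else 0) else 0)"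
    by auto
  show ?thesis unfolding e using assms by simp
qed

lemma pp_cnj: "cnj (pp u v q p) = pp u v p q"
  by (cases p; cases q) (simp add: pp_apply mult_ac)

lemma re_half: "complex_of_real (Re z) * w = (z * w + cnj z * w) / 2"
  by (simp add: complex_eq_iff algebra_simps)

lemma dec_herm:
  assumes herm: "\<forall>p\<in>{..<mA} \<times> {..<mB}. \<forall>q\<in>{..<mA} \<times> {..<mB}. \<mu> q p = cnj (\<mu> p q)"
  obtains I :: "(nat \<times> nat \<times> nat \<times> nat \<times> nat \<times> nat) set" and c \<alpha> \<beta> where "finite I"
    "\<And>i j i' j'. i < mA \<Longrightarrow> j < mB \<Longrightarrow> i' < mA \<Longrightarrow> j' < mB \<Longrightarrow>
        \<mu> (i, j) (i', j') = (\<Sum>k\<in>I. complex_of_real (c k) * pp (\<alpha> k) (\<beta> k) (i, j) (i', j'))"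
proof -
  define I :: "(nat \<times> nat \<times> nat \<times> nat \<times> nat \<times> nat) set" where
    "I = {..<mA} \<times> {..<mB} \<times> {..<mA} \<times> {..<mB} \<times> {..<4} \<times> {..<4}"
  define \<alpha> where "\<alpha> = (\<lambda>(i::nat, j::nat, i'::nat, j'::nat, s::nat, s'::nat). ev i s i')"
  define \<beta> where "\<beta> = (\<lambda>(i::nat, j::nat, i'::nat, j'::nat, s::nat, s'::nat). ev j s' j')"
  define C where "C = (\<lambda>(i, j, i', j', s, s'). \<mu> (i, j) (i', j') * om s * om s' / 16)"
  have fin: "finite I" unfolding I_def by simp
  have cplx: "(\<Sum>k\<in>I. C k * pp (\<alpha> k) (\<beta> k) (x, y) (x', y')) = \<mu> (x, y) (x', y')"
    if xy: "x < mA" "y < mB" "x' < mA" "y' < mB" for x y x' y'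
  proof -
    have "(\<Sum>k\<in>I. C k * pp (\<alpha> k) (\<beta> k) (x, y) (x', y'))
       = (\<Sum>i<mA. \<Sum>j<mB. \<Sum>i'<mA. \<Sum>j'<mB. \<Sum>s<4. \<Sum>s'<4.
            \<mu> (i, j) (i', j') * om s * om s' / 16 * (ev i s i' x * cnj (ev i s i' x') * (ev j s' j' y * cnj (ev j s' j' y'))))"
    proof -
      have Fe: "(\<lambda>k. C k * pp (\<alpha> k) (\<beta> k) (x, y) (x', y')) = (\<lambda>(i, j, i', j', s, s').
            \<mu> (i, j) (i', j') * om s * om s' / 16 * (ev i s i' x * cnj (ev i s i' x') * (ev j s' j' y * cnj (ev j s' j' y'))))"
        by (intro ext) (simp add: C_def \<alpha>_def \<beta>_def pp_apply split: prod.split)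
      show ?thesis unfolding Fe I_def sum6 ..
    qed
    also have "\<dots> = (\<Sum>i<mA. \<Sum>j<mB. \<Sum>i'<mA. \<Sum>j'<mB. \<mu> (i, j) (i', j') / 16 *
            ((\<Sum>s<4. om s * (ev i s i' x * cnj (ev i s i' x'))) * (\<Sum>s'<4. om s' * (ev j s' j' y * cnj (ev j s' j' y')))))"
      by (simp only: ss4)
    also have "\<dots> = (\<Sum>i<mA. \<Sum>j<mB. \<Sum>i'<mA. \<Sum>j'<mB. \<mu> (i, j) (i', j') *
            ((if x = i \<and> x' = i' then 1 else 0) * (if y = j \<and> y' = j' then 1 else 0)))"
      by (simp only: polar) simp
    also have "\<dots> = \<mu> (x, y) (x', y')"
      by (rule delta4[OF xy])
    finally show ?thesis .
  qed
  have real: "\<mu> (x, y) (x', y') = (\<Sum>k\<in>I. complex_of_real (Re (C k)) * pp (\<alpha> k) (\<beta> k) (x, y) (x', y'))"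
    if xy: "x < mA" "y < mB" "x' < mA" "y' < mB" for x y x' y'
  proof -
    have m1: "(x', y') \<in> {..<mA} \<times> {..<mB}" and m2: "(x, y) \<in> {..<mA} \<times> {..<mB}" using xy by auto
    have h: "\<mu> (x, y) (x', y') = cnj (\<mu> (x', y') (x, y))" using bspec[OF bspec[OF herm m1] m2] .
    have e: "\<mu> (x', y') (x, y) = (\<Sum>k\<in>I. C k * pp (\<alpha> k) (\<beta> k) (x', y') (x, y))"
      by (rule cplx[OF xy(3) xy(4) xy(1) xy(2), symmetric])
    have "\<mu> (x, y) (x', y') = cnj (\<Sum>k\<in>I. C k * pp (\<alpha> k) (\<beta> k) (x', y') (x, y))"
      using h unfolding e .
    also have "\<dots> = (\<Sum>k\<in>I. cnj (C k) * pp (\<alpha> k) (\<beta> k) (x, y) (x', y'))"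
      by (simp only: cnj_sum complex_cnj_mult pp_cnj)
    finally have c2: "\<mu> (x, y) (x', y') = (\<Sum>k\<in>I. cnj (C k) * pp (\<alpha> k) (\<beta> k) (x, y) (x', y'))" .
    have "(\<Sum>k\<in>I. complex_of_real (Re (C k)) * pp (\<alpha> k) (\<beta> k) (x, y) (x', y'))
        = (\<Sum>k\<in>I. (C k * pp (\<alpha> k) (\<beta> k) (x, y) (x', y') + cnj (C k) * pp (\<alpha> k) (\<beta> k) (x, y) (x', y')) / 2)"
      by (intro sum.cong refl) (rule re_half)
    also have "\<dots> = (\<mu> (x, y) (x', y') + \<mu> (x, y) (x', y')) / 2"
      using cplx[OF xy] c2 by (simp add: sum_divide_distrib[symmetric] sum.distrib)
    finally show ?thesis by simp
  qed
  show ?thesis using that[OF fin real] by blast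
qed

context
  fixes dA dB :: nat and \<rho>0 \<rho>1 :: bop and ps0 ps1 and mA mB :: nat and S :: strategy
  assumes r0: "rep dA dB \<rho>0 ps0" and r1: "rep dA dB \<rho>1 ps1"
    and g0: "good dA dB ps0" and g1: "good dA dB ps1"
    and mA: "0 < mA" and mB: "0 < mB" and valid: "valid_strategy dA dB mA mB S"
begin

lemma upper_pp:
  assumes lam: "1 < lam"
  shows "0 \<le> succ_prob dA dB mA mB \<rho>0 \<rho>1 S h (pp (fst v) (snd v)) n t \<and>
         succ_prob dA dB mA mB \<rho>0 \<rho>1 S h (pp (fst v) (snd v)) n t \<le> Nv mA mB v * (1 + (lam - 1) * P_LOCC dA dB \<rho>0 \<rho>1) ^ n * lam powr (- t)"
proof (rule abstract_upper[where sp = "\<lambda>h v n t. succ_prob dA dB mA mB \<rho>0 \<rho>1 S h (pp (fst v) (snd v)) n t"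
      and N = "Nv mA mB" and L = "\<lambda>h. length (fst (S h))" and K = "\<lambda>z. length (if z then ps1 else ps0)"
      and w = "\<lambda>z k. fst ((if z then ps1 else ps0) ! k)"
      and ch = "\<lambda>h v z l k. chld dA dB mA mB (fst (S h) ! l) (if z then ps1 else ps0) v k"
      and G = "\<lambda>h l. snd (S h) l" and nxt = "\<lambda>h l. h @ [l]"])
  have Lh: "locc (dA * mA) (dB * mB) mA mB (fst (S h))" for h
    using valid unfolding valid_strategy_def by blast
  have gz: "good dA dB (if z then ps1 else ps0)" for z using g0 g1 by simp
  show "\<And>h v t. succ_prob dA dB mA mB \<rho>0 \<rho>1 S h (pp (fst v) (snd v)) 0 t = (if t \<le> 0 then Nv mA mB v else 0)"
    by (simp add: btrace_pp Nv_def)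
  show "\<And>h v n t. succ_prob dA dB mA mB \<rho>0 \<rho>1 S h (pp (fst v) (snd v)) (Suc n) t =
     (\<Sum>z\<in>UNIV. 1 / 2 * (\<Sum>l<length (fst (S h)). \<Sum>k<length (if z then ps1 else ps0).
        fst ((if z then ps1 else ps0) ! k) *
        succ_prob dA dB mA mB \<rho>0 \<rho>1 S (h @ [l])
          (pp (fst (chld dA dB mA mB (fst (S h) ! l) (if z then ps1 else ps0) v k))
              (snd (chld dA dB mA mB (fst (S h) ! l) (if z then ps1 else ps0) v k))) n
          (t - (if snd (S h) l = z then 1 else 0))))"
    by (simp only: succ_step_pp[OF r0 r1 mA mB] case_prod_beta)
  show "\<And>v. 0 \<le> Nv mA mB v" by (rule Nv_nonneg)
  show "\<And>z k. k < length (if z then ps1 else ps0) \<Longrightarrow> 0 \<le> fst ((if z then ps1 else ps0) ! k)"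
    using gz unfolding good_def by blast
  show "\<And>h v z. (\<Sum>l<length (fst (S h)). \<Sum>k<length (if z then ps1 else ps0).
           fst ((if z then ps1 else ps0) ! k) * Nv mA mB (chld dA dB mA mB (fst (S h) ! l) (if z then ps1 else ps0) v k)) = Nv mA mB v"
    by (rule cons_pp[OF Lh gz mA mB])
  show "\<And>h v. 1 / 2 * (\<Sum>l<length (fst (S h)). \<Sum>k<length (if snd (S h) l then ps1 else ps0).
           fst ((if snd (S h) l then ps1 else ps0) ! k) *
           Nv mA mB (chld dA dB mA mB (fst (S h) ! l) (if snd (S h) l then ps1 else ps0) v k))
        \<le> P_LOCC dA dB \<rho>0 \<rho>1 * Nv mA mB v"
    by (rule rb_pp[OF Lh r0 r1 g0 g1 mA mB])
  show "1 < lam" by (rule lam)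
  show "0 \<le> P_LOCC dA dB \<rho>0 \<rho>1"
    using norm_nonneg[OF r0 r1 g0 g1] unfolding P_LOCC_def by simp
qed

lemma upper_main:
  assumes dens: "density mA mB \<mu>1" and ach: "achievable dA dB mA mB \<rho>0 \<rho>1 \<mu>1 S r"
  shows "r \<le> P_LOCC dA dB \<rho>0 \<rho>1"
proof (rule ccontr)
  let ?P = "P_LOCC dA dB \<rho>0 \<rho>1"
  assume "\<not> r \<le> ?P"
  then have Pr: "?P < r" by simp
  have P0: "0 \<le> ?P" using norm_nonneg[OF r0 r1 g0 g1] unfolding P_LOCC_def by simp
  obtain lam where lam: "1 < lam" "1 + (lam - 1) * ?P < lam powr r" using exists_lam_up[OF Pr] by blast
  define A where "A = 1 + (lam - 1) * ?P"
  have "0 \<le> (lam - 1) * ?P" using lam P0 by simp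
  then have A0: "0 < A" unfolding A_def by simp
  define \<beta> where "\<beta> = A * lam powr (- r)"
  have \<beta>0: "0 < \<beta>" unfolding \<beta>_def using A0 lam by simp
  have \<beta>1: "\<beta> < 1"
  proof -
    have "lam powr r * lam powr (- r) = 1" using lam by (simp add: powr_add[symmetric])
    moreover have "A * lam powr (- r) < lam powr r * lam powr (- r)"
      using lam A_def by (intro mult_strict_right_mono) auto
    ultimately show ?thesis unfolding \<beta>_def by simp
  qed
  have herm: "\<forall>p\<in>{..<mA} \<times> {..<mB}. \<forall>q\<in>{..<mA} \<times> {..<mB}. \<mu>1 q p = cnj (\<mu>1 p q)"
    using dens unfolding density_def by blast
  obtain I :: "(nat \<times> nat \<times> nat \<times> nat \<times> nat \<times> nat) set" and c \<alpha> \<beta>' where fin: "finite I"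
    and dec: "\<And>i j i' j'. i < mA \<Longrightarrow> j < mB \<Longrightarrow> i' < mA \<Longrightarrow> j' < mB \<Longrightarrow>
        \<mu>1 (i, j) (i', j') = (\<Sum>k\<in>I. complex_of_real (c k) * pp (\<alpha> k) (\<beta>' k) (i, j) (i', j'))"
    by (rule dec_herm[OF herm]) blast
  define C where "C = (\<Sum>k\<in>I. \<bar>c k\<bar> * Nv mA mB (\<alpha> k, \<beta>' k))"
  have C0: "0 \<le> C" unfolding C_def by (intro sum_nonneg mult_nonneg_nonneg Nv_nonneg) auto
  have bound: "succ_prob dA dB mA mB \<rho>0 \<rho>1 S [] \<mu>1 n (r * real n) \<le> C * \<beta> ^ n" for n
  proof -
    have pw: "lam powr (- (r * real n)) = (lam powr (- r)) ^ n"
    proof -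
      have "lam powr (- (r * real n)) = (lam powr (- r)) powr (real n)" by (simp add: powr_powr)
      also have "\<dots> = (lam powr (- r)) ^ n" using lam by (intro powr_realpow) simp
      finally show ?thesis .
    qed
    have "succ_prob dA dB mA mB \<rho>0 \<rho>1 S [] \<mu>1 n (r * real n)
        = (\<Sum>k\<in>I. c k * succ_prob dA dB mA mB \<rho>0 \<rho>1 S [] (pp (\<alpha> k) (\<beta>' k)) n (r * real n))"
      by (rule succ_lin[where \<nu>="\<lambda>k. pp (\<alpha> k) (\<beta>' k)" and c=c, OF fin mA mB dec])
    also have "\<dots> \<le> (\<Sum>k\<in>I. \<bar>c k\<bar> * (Nv mA mB (\<alpha> k, \<beta>' k) * A ^ n * lam powr (- (r * real n))))"
    proof (rule sum_mono)
      fix k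
      have u: "0 \<le> succ_prob dA dB mA mB \<rho>0 \<rho>1 S [] (pp (\<alpha> k) (\<beta>' k)) n (r * real n) \<and>
          succ_prob dA dB mA mB \<rho>0 \<rho>1 S [] (pp (\<alpha> k) (\<beta>' k)) n (r * real n) \<le> Nv mA mB (\<alpha> k, \<beta>' k) * A ^ n * lam powr (- (r * real n))"
        using upper_pp[OF lam(1), of "[]" "(\<alpha> k, \<beta>' k)" n "r * real n"] unfolding A_def by simp
      have "c k * succ_prob dA dB mA mB \<rho>0 \<rho>1 S [] (pp (\<alpha> k) (\<beta>' k)) n (r * real n)
          \<le> \<bar>c k\<bar> * succ_prob dA dB mA mB \<rho>0 \<rho>1 S [] (pp (\<alpha> k) (\<beta>' k)) n (r * real n)"
        using u by (intro mult_right_mono) auto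
      also have "\<dots> \<le> \<bar>c k\<bar> * (Nv mA mB (\<alpha> k, \<beta>' k) * A ^ n * lam powr (- (r * real n)))"
        using u by (intro mult_left_mono) auto
      finally show "c k * succ_prob dA dB mA mB \<rho>0 \<rho>1 S [] (pp (\<alpha> k) (\<beta>' k)) n (r * real n)
          \<le> \<bar>c k\<bar> * (Nv mA mB (\<alpha> k, \<beta>' k) * A ^ n * lam powr (- (r * real n)))" .
    qed
    also have "\<dots> = C * \<beta> ^ n"
      unfolding C_def \<beta>_def pw by (simp add: sum_distrib_left sum_distrib_right power_mult_distrib mult_ac)
    finally show ?thesis .
  qed
  obtain M where M: "C * \<beta> ^ M < 1/2"
  proof (cases "C = 0")
    case True
    then show ?thesis using that[of 0] by simp
  next
    case False
    then have "0 < 1 / (2 * C)" using C0 by simp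
    from real_arch_pow_inv[OF this \<beta>1] obtain M where "\<beta> ^ M < 1 / (2 * C)" by blast
    then have "C * \<beta> ^ M < C * (1 / (2 * C))" using False C0 by (intro mult_strict_left_mono) auto
    then show ?thesis using that[of M] False by simp
  qed
  from ach have "\<exists>n\<ge>Suc M. succ_prob dA dB mA mB \<rho>0 \<rho>1 S [] \<mu>1 n (r * real n) \<ge> 1 - 1/2"
    unfolding achievable_def by (meson half_gt_zero zero_less_Suc zero_less_one)
  then obtain n where n: "n \<ge> Suc M" "succ_prob dA dB mA mB \<rho>0 \<rho>1 S [] \<mu>1 n (r * real n) \<ge> 1/2" by auto
  have "\<beta> ^ n \<le> \<beta> ^ M" using \<beta>0 \<beta>1 n(1) by (intro power_decreasing) auto
  then have "C * \<beta> ^ n \<le> C * \<beta> ^ M" using C0 by (intro mult_left_mono)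
  then show False using bound[of n] n(2) M by simp
qed

end

lemma nth_concat_uniform:
  assumes "\<forall>xs\<in>set xss. length xs = K" "l < length xss" "p < K"
  shows "concat xss ! (l * K + p) = xss ! l ! p"
  using assms
proof (induction xss arbitrary: l)
  case Nil
  then show ?case by simp
next
  case (Cons xs xss)
  show ?case
  proof (cases l)
    case 0
    then show ?thesis using Cons.prems by (simp add: nth_append)
  next
    case (Suc l')
    have "concat (xs # xss) ! (l * K + p) = concat xss ! (l' * K + p)"
      using Cons.prems Suc by (simp add: nth_append algebra_simps)
    also have "\<dots> = xss ! l' ! p" using Cons Suc by simp
    finally show ?thesis using Suc by simp
  qed
qed

lemma length_concat_uniform:
  assumes "\<forall>xs\<in>set xss. length xs = K"
  shows "length (concat xss) = length xss * K"
  using assms by (induction xss) auto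

lemma length_pairs: "length (pairs a b) = a * b"
  unfolding pairs_def by (subst length_concat_uniform[where K=b]) auto

lemma pairs_nth: "i < a \<Longrightarrow> j < b \<Longrightarrow> pairs a b ! (i * b + j) = (i, j)"
  unfolding pairs_def by (subst nth_concat_uniform[where K=b]) auto

lemma sum_pairs: "(\<Sum>p<a * b. f (pairs a b ! p)) = (\<Sum>i<a. \<Sum>j<b. f (i, j))"
  unfolding sum_mult_split by (intro sum.cong refl) (simp add: pairs_nth)

lemma length_tleaf: "length (tleaf a b XY) = a * b"
  by (simp add: tleaf_def length_pairs)

lemma vn2_one: "vn2 1 w = (cmod (w 0))\<^sup>2"
  by (simp add: vn2_def)

lemma vn2_one': "vn2 (Suc 0) w = (cmod (w 0))\<^sup>2"
  by (simp add: vn2_def)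

lemma app_E1: "i < a \<Longrightarrow> app a (E1 i) w 0 = w i"
  by (simp add: app_def E1_def if_distrib[of "\<lambda>t. t * _"] cong: if_cong)

lemma wsep_E1:
  assumes "i < a'" "j < b'"
  shows "wsep dA dB 1 1 ps (mmul a' (E1 i) X, mmul b' (E1 j) Y) =
    (\<Sum>k<length ps. fst (ps ! k) * ((cmod (app dA X (fst (snd (ps ! k))) i))\<^sup>2 * (cmod (app dB Y (snd (snd (ps ! k))) j))\<^sup>2))"
  unfolding wsep_def using assms by (simp add: app_mmul vn2_one vn2_one' app_E1)

lemma wsep_tleaf:
  "(\<Sum>p<a' * b'. wsep dA dB 1 1 ps (tleaf a' b' XY ! p)) = wsep dA dB a' b' ps XY"
proof -
  define f where "f = (\<lambda>ij. wsep dA dB 1 1 ps (mmul a' (E1 (fst ij)) (fst XY), mmul b' (E1 (snd ij)) (snd XY)))"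
  have "(\<Sum>p<a' * b'. wsep dA dB 1 1 ps (tleaf a' b' XY ! p)) = (\<Sum>p<a' * b'. f (pairs a' b' ! p))"
    by (intro sum.cong refl) (simp add: tleaf_def length_pairs case_prod_beta f_def)
  also have "\<dots> = (\<Sum>i<a'. \<Sum>j<b'. f (i, j))"
    by (rule sum_pairs)
  also have "\<dots> = (\<Sum>i<a'. \<Sum>j<b'. wsep dA dB 1 1 ps (mmul a' (E1 i) (fst XY), mmul b' (E1 j) (snd XY)))"
    by (simp add: f_def)
  also have "\<dots> = (\<Sum>i<a'. \<Sum>j<b'. \<Sum>k<length ps. fst (ps ! k) * ((cmod (app dA (fst XY) (fst (snd (ps ! k))) i))\<^sup>2 * (cmod (app dB (snd XY) (snd (snd (ps ! k))) j))\<^sup>2))"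
    by (intro sum.cong refl wsep_E1) auto
  also have "\<dots> = (\<Sum>k<length ps. fst (ps ! k) * (\<Sum>i<a'. \<Sum>j<b'. (cmod (app dA (fst XY) (fst (snd (ps ! k))) i))\<^sup>2 * (cmod (app dB (snd XY) (snd (snd (ps ! k))) j))\<^sup>2))"
  proof -
    have "(\<Sum>i<a'. \<Sum>j<b'. \<Sum>k<length ps. fst (ps ! k) * ((cmod (app dA (fst XY) (fst (snd (ps ! k))) i))\<^sup>2 * (cmod (app dB (snd XY) (snd (snd (ps ! k))) j))\<^sup>2))
       = (\<Sum>k<length ps. \<Sum>i<a'. \<Sum>j<b'. fst (ps ! k) * ((cmod (app dA (fst XY) (fst (snd (ps ! k))) i))\<^sup>2 * (cmod (app dB (snd XY) (snd (snd (ps ! k))) j))\<^sup>2))"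
      by (subst sum.swap, rule sum.cong[OF refl], rule sum.swap)
    then show ?thesis by (simp add: sum_distrib_left)
  qed
  also have "\<dots> = wsep dA dB a' b' ps XY"
    unfolding wsep_def vn2_def by (simp add: sum_product)
  finally show ?thesis .
qed

lemma succ_L1:
  "(\<Sum>m<length (concat (map (tleaf a' b') L)). wsep dA dB 1 1 (if g (m div (a' * b')) then ps1 else ps0) (concat (map (tleaf a' b') L) ! m))
    = (\<Sum>l<length L. wsep dA dB a' b' (if g l then ps1 else ps0) (L ! l))"
proof -
  have u: "\<forall>xs\<in>set (map (tleaf a' b') L). length xs = a' * b'" by (simp add: length_tleaf)
  have len: "length (concat (map (tleaf a' b') L)) = length L * (a' * b')"
    using length_concat_uniform[OF u] by simp
  have "(\<Sum>m<length (concat (map (tleaf a' b') L)). wsep dA dB 1 1 (if g (m div (a' * b')) then ps1 else ps0) (concat (map (tleaf a' b') L) ! m))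
      = (\<Sum>l<length L. \<Sum>p<a' * b'. wsep dA dB 1 1 (if g ((l * (a' * b') + p) div (a' * b')) then ps1 else ps0) (concat (map (tleaf a' b') L) ! (l * (a' * b') + p)))"
    unfolding len by (rule sum_mult_split)
  also have "\<dots> = (\<Sum>l<length L. \<Sum>p<a' * b'. wsep dA dB 1 1 (if g l then ps1 else ps0) (tleaf a' b' (L ! l) ! p))"
  proof (intro sum.cong refl)
    fix l p assume "l \<in> {..<length L}" "p \<in> {..<a' * b'}"
    then have lp: "l < length L" "p < a' * b'" by auto
    have K0: "a' * b' \<noteq> 0" using lp by (metis less_nat_zero_code)
    have "(l * (a' * b') + p) div (a' * b') = l"
      using div_mult_self1[OF K0, of p l] lp by (simp add: add.commute)
    moreover have "concat (map (tleaf a' b') L) ! (l * (a' * b') + p) = tleaf a' b' (L ! l) ! p"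
      using nth_concat_uniform[OF u] lp by simp
    ultimately show "wsep dA dB 1 1 (if g ((l * (a' * b') + p) div (a' * b')) then ps1 else ps0) (concat (map (tleaf a' b') L) ! (l * (a' * b') + p))
        = wsep dA dB 1 1 (if g l then ps1 else ps0) (tleaf a' b' (L ! l) ! p)" by simp
  qed
  also have "\<dots> = (\<Sum>l<length L. wsep dA dB a' b' (if g l then ps1 else ps0) (L ! l))"
    by (simp only: wsep_tleaf)
  finally show ?thesis .
qed

lemma tens_one: "tens 1 u a = (\<lambda>x. a 0 * u x)"
  by (simp add: tens_def mult.commute)

lemma tens_one': "tens (Suc 0) u a = (\<lambda>x. a 0 * u x)"
  by (simp add: tens_def mult.commute)

lemma Nv_chld_one:
  "Nv 1 1 (chld dA dB 1 1 K ps v k) = Nv 1 1 v * (vn2 1 (app dA (fst K) (fst (snd (ps ! k)))) * vn2 1 (app dB (snd K) (snd (snd (ps ! k)))))"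
  by (simp add: Nv_def chld_def tens_one tens_one' app_scale vn2_scale vn2_one' vn2_one)

context
  fixes dA dB :: nat and \<rho>0 \<rho>1 :: bop and ps0 ps1 and S :: strategy
  assumes r0: "rep dA dB \<rho>0 ps0" and r1: "rep dA dB \<rho>1 ps1"
    and g0: "good dA dB ps0" and g1: "good dA dB ps1"
    and valid: "valid_strategy dA dB 1 1 S"
begin

lemma lower_pp:
  assumes lam: "0 < lam" "lam < 1" and q: "q \<le> 1"
    and rs: "\<And>h v. q * Nv 1 1 v \<le> 1/2 * (\<Sum>l<length (fst (S h)). \<Sum>k<length (if snd (S h) l then ps1 else ps0).
           fst ((if snd (S h) l then ps1 else ps0) ! k) *
           Nv 1 1 (chld dA dB 1 1 (fst (S h) ! l) (if snd (S h) l then ps1 else ps0) v k))"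
  shows "Nv 1 1 v - succ_prob dA dB 1 1 \<rho>0 \<rho>1 S h (pp (fst v) (snd v)) n t \<le> Nv 1 1 v * (1 - (1 - lam) * q) ^ n * lam powr (- t)"
proof (rule abstract_lower[where sp = "\<lambda>h v n t. succ_prob dA dB 1 1 \<rho>0 \<rho>1 S h (pp (fst v) (snd v)) n t"
      and N = "Nv 1 1" and L = "\<lambda>h. length (fst (S h))" and K = "\<lambda>z. length (if z then ps1 else ps0)"
      and w = "\<lambda>z k. fst ((if z then ps1 else ps0) ! k)"
      and ch = "\<lambda>h v z l k. chld dA dB 1 1 (fst (S h) ! l) (if z then ps1 else ps0) v k"
      and G = "\<lambda>h l. snd (S h) l" and nxt = "\<lambda>h l. h @ [l]"])
  have Lh: "locc (dA * 1) (dB * 1) 1 1 (fst (S h))" for h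
    using valid unfolding valid_strategy_def by blast
  have gz: "good dA dB (if z then ps1 else ps0)" for z using g0 g1 by simp
  have one: "(0::nat) < 1" by simp
  show "\<And>h v t. succ_prob dA dB 1 1 \<rho>0 \<rho>1 S h (pp (fst v) (snd v)) 0 t = (if t \<le> 0 then Nv 1 1 v else 0)"
    by (simp add: btrace_pp Nv_def)
  show "\<And>h v n t. succ_prob dA dB 1 1 \<rho>0 \<rho>1 S h (pp (fst v) (snd v)) (Suc n) t =
     (\<Sum>z\<in>UNIV. 1 / 2 * (\<Sum>l<length (fst (S h)). \<Sum>k<length (if z then ps1 else ps0).
        fst ((if z then ps1 else ps0) ! k) *
        succ_prob dA dB 1 1 \<rho>0 \<rho>1 S (h @ [l])
          (pp (fst (chld dA dB 1 1 (fst (S h) ! l) (if z then ps1 else ps0) v k))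
              (snd (chld dA dB 1 1 (fst (S h) ! l) (if z then ps1 else ps0) v k))) n
          (t - (if snd (S h) l = z then 1 else 0))))"
    by (simp only: succ_step_pp[OF r0 r1 one one] case_prod_beta)
  show "\<And>v. 0 \<le> Nv 1 1 v" by (rule Nv_nonneg)
  show "\<And>z k. k < length (if z then ps1 else ps0) \<Longrightarrow> 0 \<le> fst ((if z then ps1 else ps0) ! k)"
    using gz unfolding good_def by blast
  show "\<And>h v z. (\<Sum>l<length (fst (S h)). \<Sum>k<length (if z then ps1 else ps0).
           fst ((if z then ps1 else ps0) ! k) * Nv 1 1 (chld dA dB 1 1 (fst (S h) ! l) (if z then ps1 else ps0) v k)) = Nv 1 1 v"
    by (rule cons_pp[OF Lh gz one one])
  show "\<And>h v. q * Nv 1 1 v \<le> 1 / 2 * (\<Sum>l<length (fst (S h)). \<Sum>k<length (if snd (S h) l then ps1 else ps0).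
           fst ((if snd (S h) l then ps1 else ps0) ! k) *
           Nv 1 1 (chld dA dB 1 1 (fst (S h) ! l) (if snd (S h) l then ps1 else ps0) v k))"
    by (rule rs)
qed (use lam q in auto)

end

lemma density_one: "density 1 1 (pp (\<lambda>_. 1) (\<lambda>_. 1))"
  unfolding density_def
proof (intro conjI allI ballI)
  fix p q :: "nat \<times> nat"
  show "pp (\<lambda>_. 1) (\<lambda>_. 1) q p = cnj (pp (\<lambda>_. 1) (\<lambda>_. 1) p q)"
    by (cases p; cases q) (simp add: pp_apply)
next
  fix v :: "nat \<times> nat \<Rightarrow> complex"
  have "(\<Sum>p\<in>{..<1::nat} \<times> {..<1::nat}. \<Sum>q\<in>{..<1::nat} \<times> {..<1::nat}. cnj (v p) * pp (\<lambda>_. 1) (\<lambda>_. 1) p q * v q) = cnj (v (0, 0)) * v (0, 0)"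
    by (simp add: pp_apply lessThan_Suc)
  moreover have "0 \<le> Re (cnj (v (0, 0)) * v (0, 0))"
    by (simp add: power2_eq_square[symmetric])
  ultimately show "0 \<le> Re (\<Sum>p\<in>{..<1} \<times> {..<1}. \<Sum>q\<in>{..<1} \<times> {..<1}. cnj (v p) * pp (\<lambda>_. 1) (\<lambda>_. 1) p q * v q)"
    by simp
next
  show "btrace 1 1 (pp (\<lambda>_. 1) (\<lambda>_. 1)) = 1" by (simp add: btrace_def pp_apply)
qed

lemma lower_main:
  assumes r0: "rep dA dB \<rho>0 ps0" and r1: "rep dA dB \<rho>1 ps1"
    and g0: "good dA dB ps0" and g1: "good dA dB ps1"
    and rP: "r < P_LOCC dA dB \<rho>0 \<rho>1"
  shows "\<exists>mA mB \<mu>1 S. 0 < mA \<and> 0 < mB \<and> density mA mB \<mu>1 \<and> valid_strategy dA dB mA mB S \<and> achievable dA dB mA mB \<rho>0 \<rho>1 \<mu>1 S r"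
proof -
  have "4 * (r - 1/2) < Sup (valset dA dB \<rho>0 \<rho>1)"
    using rP unfolding P_LOCC_def locc_norm_valset[OF r0 r1 g0 g1] by simp
  then obtain x where "x \<in> valset dA dB \<rho>0 \<rho>1" "4 * (r - 1/2) < x"
    using less_cSup_iff[OF valset_ne[OF r0 r1 g0 g1] valset_bdd[OF r0 r1 g0 g1]] by blast
  note xv = this
  have "\<exists>a' b' L lab. x = (\<Sum>c\<in>lab ` {..<length L}. cmod (trprod dA dB (povm_elem a' b' L lab c) (\<lambda>p q. \<rho>0 p q - \<rho>1 p q))) \<and> locc dA dB a' b' L"
    using xv(1) unfolding valset_def[OF r0 r1 g0 g1] by simp
  then obtain a' b' L lab where L: "locc dA dB a' b' L"
    and xdef: "x = (\<Sum>c\<in>lab ` {..<length L}. cmod (trprod dA dB (povm_elem a' b' L lab c) (\<lambda>p q. \<rho>0 p q - \<rho>1 p q)))"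
    by blast
  have x4: "4 * (r - 1/2) < x" by (rule xv(2))
  define G where "G = (\<lambda>c. Wc dA dB a' b' ps0 L lab c - Wc dA dB a' b' ps1 L lab c < 0)"
  define g where "g = (\<lambda>l. G (lab l))"
  define \<sigma> where "\<sigma> = (1/2) * (\<Sum>l<length L. wsep dA dB a' b' (if g l then ps1 else ps0) (L ! l))"
  have \<sigma>eq: "\<sigma> = 1/2 + 1/4 * x"
    unfolding \<sigma>_def g_def xdef G_def by (rule success_lower[OF r0 r1 g0 g1 L])
  have r\<sigma>: "r < \<sigma>" using \<sigma>eq x4 by simp
  have \<sigma>1: "\<sigma> \<le> 1" using \<sigma>eq val_le2[OF r0 r1 g0 g1 L, of lab] xdef by simp
  define L1 where "L1 = concat (map (tleaf a' b') L)"
  define g1 where "g1 = (\<lambda>m. g (m div (a' * b')))"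
  define S :: strategy where "S = (\<lambda>h. (L1, g1))"
  have L1: "locc dA dB 1 1 L1" unfolding L1_def by (rule locc_discard[OF L])
  have valid: "valid_strategy dA dB 1 1 S" unfolding valid_strategy_def S_def using L1 by simp
  have rs: "\<sigma> * Nv 1 1 v \<le> 1/2 * (\<Sum>l<length (fst (S h)). \<Sum>k<length (if snd (S h) l then ps1 else ps0).
           fst ((if snd (S h) l then ps1 else ps0) ! k) *
           Nv 1 1 (chld dA dB 1 1 (fst (S h) ! l) (if snd (S h) l then ps1 else ps0) v k))" for h v
  proof -
    have "(\<Sum>l<length (fst (S h)). \<Sum>k<length (if snd (S h) l then ps1 else ps0).
           fst ((if snd (S h) l then ps1 else ps0) ! k) *
           Nv 1 1 (chld dA dB 1 1 (fst (S h) ! l) (if snd (S h) l then ps1 else ps0) v k))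
        = Nv 1 1 v * (\<Sum>m<length L1. wsep dA dB 1 1 (if g1 m then ps1 else ps0) (L1 ! m))"
      unfolding S_def fst_conv snd_conv Nv_chld_one wsep_def
      by (simp add: sum_distrib_left mult_ac)
    also have "(\<Sum>m<length L1. wsep dA dB 1 1 (if g1 m then ps1 else ps0) (L1 ! m))
        = (\<Sum>l<length L. wsep dA dB a' b' (if g l then ps1 else ps0) (L ! l))"
      unfolding L1_def g1_def by (rule succ_L1)
    finally show ?thesis unfolding \<sigma>_def by simp
  qed
  obtain lam where lam: "0 < lam" "lam < 1" "1 - (1 - lam) * \<sigma> < lam powr r"
    using exists_lam_low[OF r\<sigma>] by blast
  define B where "B = 1 - (1 - lam) * \<sigma>"
  have B0: "0 \<le> B"
  proof -
    have "(1 - lam) * \<sigma> \<le> (1 - lam) * 1" using lam \<sigma>1 by (intro mult_left_mono) auto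
    then have "(1 - lam) * \<sigma> \<le> 1 - lam" by simp
    then show ?thesis unfolding B_def using lam by linarith
  qed
  define \<beta> where "\<beta> = B * lam powr (- r)"
  have \<beta>0: "0 \<le> \<beta>" unfolding \<beta>_def using B0 by simp
  have \<beta>1: "\<beta> < 1"
  proof -
    have "lam powr r * lam powr (- r) = 1" using lam by (simp add: powr_add[symmetric])
    moreover have "B * lam powr (- r) < lam powr r * lam powr (- r)"
      using lam B_def by (intro mult_strict_right_mono) auto
    ultimately show ?thesis unfolding \<beta>_def by simp
  qed
  define one :: "nat \<Rightarrow> complex" where "one = (\<lambda>_. 1)"
  have N1: "Nv 1 1 (one, one) = 1" by (simp add: Nv_def vn2_def one_def)
  have fail: "1 - succ_prob dA dB 1 1 \<rho>0 \<rho>1 S [] (pp one one) n (r * real n) \<le> \<beta> ^ n" for n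
  proof -
    have pw: "lam powr (- (r * real n)) = (lam powr (- r)) ^ n"
    proof -
      have "lam powr (- (r * real n)) = (lam powr (- r)) powr (real n)" by (simp add: powr_powr)
      also have "\<dots> = (lam powr (- r)) ^ n" using lam by (intro powr_realpow) simp
      finally show ?thesis .
    qed
    have "Nv 1 1 (one, one) - succ_prob dA dB 1 1 \<rho>0 \<rho>1 S [] (pp (fst (one, one)) (snd (one, one))) n (r * real n)
        \<le> Nv 1 1 (one, one) * (1 - (1 - lam) * \<sigma>) ^ n * lam powr (- (r * real n))"
      by (rule lower_pp[OF r0 r1 g0 g1 valid lam(1) lam(2) \<sigma>1 rs])
    then show ?thesis unfolding N1 pw \<beta>_def B_def by (simp add: power_mult_distrib)
  qed
  have ach: "achievable dA dB 1 1 \<rho>0 \<rho>1 (pp one one) S r"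
    unfolding achievable_def
  proof (intro allI impI)
    fix \<epsilon> :: real and m :: nat
    assume \<epsilon>: "\<epsilon> > 0" and "m > 0"
    obtain N where N: "\<beta> ^ N < \<epsilon>" using real_arch_pow_inv[OF \<epsilon> \<beta>1] by blast
    define n where "n = max m N"
    have "\<beta> ^ n \<le> \<beta> ^ N" unfolding n_def using \<beta>0 \<beta>1 by (intro power_decreasing) auto
    then have "1 - \<epsilon> \<le> succ_prob dA dB 1 1 \<rho>0 \<rho>1 S [] (pp one one) n (r * real n)"
      using fail[of n] N by simp
    then show "\<exists>n\<ge>m. 1 - \<epsilon> \<le> succ_prob dA dB 1 1 \<rho>0 \<rho>1 S [] (pp one one) n (r * real n)"
      unfolding n_def by (intro exI[of _ "max m N"]) auto
  qed
  have dens: "density 1 1 (pp one one)" unfolding one_def by (rule density_one)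
  show ?thesis using valid ach dens by blast
qed

theorem proposition2:
  fixes dA dB :: nat and \<rho>0 \<rho>1 :: bop
  assumes "sep dA dB \<rho>0" and "sep dA dB \<rho>1"
  shows "R_mem dA dB \<rho>0 \<rho>1 = P_LOCC dA dB \<rho>0 \<rho>1"
proof -
  obtain ps0 where r0: "rep dA dB \<rho>0 ps0" and g0: "good dA dB ps0" using sep_rep[OF assms(1)] by blast
  obtain ps1 where r1: "rep dA dB \<rho>1 ps1" and g1: "good dA dB ps1" using sep_rep[OF assms(2)] by blast
  let ?P = "P_LOCC dA dB \<rho>0 \<rho>1"
  let ?R = "{r. \<exists>mA mB \<mu>1 S. 0 < mA \<and> 0 < mB \<and> density mA mB \<mu>1 \<and>
       valid_strategy dA dB mA mB S \<and> achievable dA dB mA mB \<rho>0 \<rho>1 \<mu>1 S r}"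
  have up: "r \<le> ?P" if "r \<in> ?R" for r
  proof -
    from that obtain mA mB \<mu>1 S where h: "0 < mA" "0 < mB" "density mA mB \<mu>1"
      "valid_strategy dA dB mA mB S" "achievable dA dB mA mB \<rho>0 \<rho>1 \<mu>1 S r" by blast
    show ?thesis by (rule upper_main[OF r0 r1 g0 g1 h(1) h(2) h(4) h(3) h(5)])
  qed
  have low: "r \<in> ?R" if "r < ?P" for r
    using lower_main[OF r0 r1 g0 g1 that] by simp
  have "?P - 1 \<in> ?R" by (rule low) simp
  then have ne: "?R \<noteq> {}" by blast
  have bdd: "bdd_above ?R" using up unfolding bdd_above_def by blast
  have le: "Sup ?R \<le> ?P" by (rule cSup_least[OF ne]) (use up in auto)
  have ge: "?P \<le> Sup ?R"
  proof (rule ccontr)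
    assume "\<not> ?P \<le> Sup ?R"
    then have lt: "Sup ?R < ?P" by simp
    define r where "r = (Sup ?R + ?P) / 2"
    have "r < ?P" "Sup ?R < r" using lt unfolding r_def by auto
    moreover have "r \<le> Sup ?R" using low[OF \<open>r < ?P\<close>] bdd by (intro cSup_upper)
    ultimately show False by simp
  qed
  show ?thesis unfolding R_mem_def using le ge by simp
qed

end
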